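(* Let $Q$ be a countable weak-latin quandle and $<$ a right order on $Q$. If $\rho$ and $\rho'$ are dynamical realizations of $<$ constructed from two enumerations of $Q$, then they are topologically conjugate by an orientation-preserving homeomorphism of $\mathbb{R}$. Consequently the realization map $R:RQ(Q)\to\mathrm{Hom}(Q,\mathrm{Conj}(\mathrm{Homeo}_+(\mathbb{R})))/\!\sim$ is well defined up to topological conjugacy.
   Context: Quandle: set $Q$ with operation $*$ satisfying $q*q=q$, unique right division, and $(q*r)*s=(q*s)*(r*s)$. Weak-latin: for any $q,r$ there is $\hat q$ with $\hat q*q=\hat q*r\Rightarrow q=r$. Right order: total order with $q_1<q_2\Rightarrow q_1*q<q_2*q$; $RQ(Q)$ is the set of right orders. Homeomorphisms act on the right; $\mathrm{Hom}(Q,\mathrm{Conj}(\mathrm{Homeo}_+(\mathbb{R})))$ is the set of $\rho$ with $\rho(r*s)=\rho(s)\circ\rho(r)\circ\rho(s)^{-1}$; $\sim$ is topological conjugacy. Dynamical realization from an enumeration $(q_i)$: $\iota:Q\to\mathbb{R}$ with $\iota(q_1)$ arbitrary; if $q_n$ is below all of $q_1,\dots,q_{n-1}$ then $\iota(q_n)$ is their minimal $\iota$-value minus $1$, if above all then their maximal $\iota$-value plus $1$, otherwise the midpoint of the $\iota$-values of its immediate neighbours among them; then $\rho(q)(\iota(r))=\iota(r*q)$ on $\iota(Q)$, extended continuously to the closure and affinely on complementary intervals. *)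

theory Defs
  imports "HOL-Analysis.Analysis"
begin

text \<open>A quandle on carrier Q with operation qop (q * r = qop q r).\<close>
definition quandle :: "'a set \<Rightarrow> ('a \<Rightarrow> 'a \<Rightarrow> 'a) \<Rightarrow> bool" where
  "quandle Q qop \<longleftrightarrow>
     (\<forall>q\<in>Q. \<forall>r\<in>Q. qop q r \<in> Q) \<and>
     (\<forall>q\<in>Q. qop q q = q) \<and>
     (\<forall>r\<in>Q. \<forall>s\<in>Q. \<exists>!q. q \<in> Q \<and> qop q r = s) \<and>
     (\<forall>q\<in>Q. \<forall>r\<in>Q. \<forall>s\<in>Q. qop (qop q r) s = qop (qop q s) (qop r s))"

definition weak_latin :: "'a set \<Rightarrow> ('a \<Rightarrow> 'a \<Rightarrow> 'a) \<Rightarrow> bool" where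
  "weak_latin Q qop \<longleftrightarrow>
     (\<forall>q\<in>Q. \<forall>r\<in>Q. \<exists>qh\<in>Q. qop qh q = qop qh r \<longrightarrow> q = r)"

definition right_order :: "'a set \<Rightarrow> ('a \<Rightarrow> 'a \<Rightarrow> 'a) \<Rightarrow> ('a \<Rightarrow> 'a \<Rightarrow> bool) \<Rightarrow> bool" where
  "right_order Q qop lt \<longleftrightarrow>
     (\<forall>q\<in>Q. \<not> lt q q) \<and>
     (\<forall>q\<in>Q. \<forall>r\<in>Q. \<forall>s\<in>Q. lt q r \<longrightarrow> lt r s \<longrightarrow> lt q s) \<and>
     (\<forall>q\<in>Q. \<forall>r\<in>Q. q \<noteq> r \<longrightarrow> lt q r \<or> lt r q) \<and>
     (\<forall>q1\<in>Q. \<forall>q2\<in>Q. \<forall>q\<in>Q. lt q1 q2 \<longrightarrow> lt (qop q1 q) (qop q2 q))"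

definition enum_dom :: "'a set \<Rightarrow> nat set" where
  "enum_dom Q = (if finite Q then {..<card Q} else UNIV)"

definition enumeration :: "'a set \<Rightarrow> (nat \<Rightarrow> 'a) \<Rightarrow> bool" where
  "enumeration Q e \<longleftrightarrow> bij_betw e (enum_dom Q) Q"

text \<open>The values v n = iota(e n) of the dynamical realization built from enumeration e;
  v 0 is arbitrary.\<close>
definition dyn_values :: "'a set \<Rightarrow> ('a \<Rightarrow> 'a \<Rightarrow> bool) \<Rightarrow> (nat \<Rightarrow> 'a) \<Rightarrow> (nat \<Rightarrow> real) \<Rightarrow> bool" where
  "dyn_values Q lt e v \<longleftrightarrow>
     (\<forall>n\<in>enum_dom Q. 0 < n \<longrightarrow>
       (if \<forall>i<n. lt (e n) (e i) then v n = Min (v ` {..<n}) - 1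
        else if \<forall>i<n. lt (e i) (e n) then v n = Max (v ` {..<n}) + 1
        else (\<exists>a<n. \<exists>b<n. lt (e a) (e n) \<and> lt (e n) (e b) \<and>
                (\<forall>i<n. \<not> (lt (e a) (e i) \<and> lt (e i) (e n))) \<and>
                (\<forall>i<n. \<not> (lt (e n) (e i) \<and> lt (e i) (e b))) \<and>
                v n = (v a + v b) / 2)))"

definition dyn_realization ::
  "'a set \<Rightarrow> ('a \<Rightarrow> 'a \<Rightarrow> 'a) \<Rightarrow> ('a \<Rightarrow> 'a \<Rightarrow> bool) \<Rightarrow> (nat \<Rightarrow> 'a) \<Rightarrow> ('a \<Rightarrow> real \<Rightarrow> real) \<Rightarrow> bool" where
  "dyn_realization Q qop lt e rho \<longleftrightarrow>
     (\<exists>v. dyn_values Q lt e v \<and>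
       (let iota = (\<lambda>q. v (the_inv_into (enum_dom Q) e q)) in
        \<forall>q\<in>Q. continuous_on UNIV (rho q) \<and>
          (\<forall>r\<in>Q. rho q (iota r) = iota (qop r q)) \<and>
          (\<forall>C\<in>components (- closure (iota ` Q)).
             (bounded C \<longrightarrow> (\<exists>a b. \<forall>x\<in>C. rho q x = a * x + b)) \<and>
             (\<not> bounded C \<longrightarrow> (\<forall>x\<in>C. rho q x = x)))))"

end

theory Submission
  imports Defs
begin

lemma smono_surj_cont:
  fixes f :: "real \<Rightarrow> real"
  assumes sm: "strict_mono f" and su: "surj f"
  shows "continuous_on UNIV f"
proof (rule continuous_at_imp_continuous_on, intro ballI)
  fix x :: real
  show "isCont f x"
    unfolding continuous_at_eps_delta
  proof (intro allI impI)
    fix e :: real assume e: "e > 0"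
    obtain a where a: "f a = f x - e" using su by (metis surjD)
    obtain b where b: "f b = f x + e" using su by (metis surjD)
    have "f a < f x" using a e by simp
    hence ax: "a < x" using sm by (simp add: strict_mono_less)
    have "f x < f b" using b e by simp
    hence xb: "x < b" using sm by (simp add: strict_mono_less)
    show "\<exists>d>0. \<forall>y. dist y x < d \<longrightarrow> dist (f y) (f x) < e"
    proof (intro exI[of _ "min (x - a) (b - x)"] conjI allI impI)
      show "0 < min (x - a) (b - x)" using ax xb by simp
      fix y assume "dist y x < min (x - a) (b - x)"
      hence "a < y" "y < b" by (auto simp: dist_real_def abs_if split: if_splits)
      hence "f a < f y" "f y < f b" using sm by (auto simp: strict_mono_less)
      thus "dist (f y) (f x) < e" using a b by (auto simp: dist_real_def abs_if)
    qed
  qed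
qed

lemma smono_surj_inv:
  fixes f :: "real \<Rightarrow> real"
  assumes sm: "strict_mono f" and su: "surj f"
  shows "strict_mono (inv f)" "surj (inv f)"
proof -
  have inj: "inj f" using sm strict_mono_imp_inj_on by blast
  show "strict_mono (inv f)"
  proof (rule strict_monoI)
    fix x y :: real assume "x < y"
    then have "f (inv f x) < f (inv f y)" using su by (simp add: surj_f_inv_f)
    then show "inv f x < inv f y" using sm by (simp add: strict_mono_less)
  qed
  show "surj (inv f)" using inj by (metis inv_f_f surjI)
qed

lemma homeo_of_smono:
  fixes f :: "real \<Rightarrow> real"
  assumes sm: "strict_mono f" and su: "surj f"
  shows "homeomorphism UNIV UNIV f (inv f)"
proof -
  have inj: "inj f" using sm strict_mono_imp_inj_on by blast
  show ?thesis unfolding homeomorphism_def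
    using smono_surj_cont[OF sm su] smono_surj_cont[OF smono_surj_inv[OF sm su]]
      smono_surj_inv(2)[OF sm su] inj su by (auto simp: surj_f_inv_f)
qed

definition gapp :: "real set \<Rightarrow> real \<Rightarrow> real \<Rightarrow> bool" where
  "gapp S l u \<longleftrightarrow> l \<in> S \<and> u \<in> S \<and> l < u \<and> (\<forall>s\<in>S. s \<le> l \<or> u \<le> s)"

definition good :: "real set \<Rightarrow> bool" where
  "good S \<longleftrightarrow>
    (\<forall>x. (\<exists>s\<in>S. s \<le> x) \<longrightarrow> (\<exists>s\<in>S. x \<le> s) \<longrightarrow>
       (\<exists>l u. gapp S l u \<and> l < x \<and> x < u) \<or>
       ((\<forall>\<epsilon>>0. \<exists>s\<in>S. x - \<epsilon> < s \<and> s \<le> x) \<and> (\<forall>\<epsilon>>0. \<exists>s\<in>S. x \<le> s \<and> s < x + \<epsilon>))) \<and>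
    (S \<noteq> {} \<longrightarrow> bdd_above S \<longrightarrow> (\<exists>m\<in>S. \<forall>s\<in>S. s \<le> m)) \<and>
    (S \<noteq> {} \<longrightarrow> bdd_below S \<longrightarrow> (\<exists>m\<in>S. \<forall>s\<in>S. m \<le> s))"

definition extf :: "real set \<Rightarrow> (real \<Rightarrow> real) \<Rightarrow> real \<Rightarrow> real" where
  "extf S f x =
    (if (\<exists>s\<in>S. s \<le> x) \<and> (\<exists>s\<in>S. x \<le> s) then
       (if \<exists>l u. gapp S l u \<and> l < x \<and> x < u then
          (let p = (SOME p. gapp S (fst p) (snd p) \<and> fst p < x \<and> x < snd p)
           in f (fst p) + (x - fst p) / (snd p - fst p) * (f (snd p) - f (fst p)))
        else Sup (f ` {s\<in>S. s \<le> x}))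
     else if (\<exists>s\<in>S. s \<le> x) then x - Sup S + f (Sup S)
     else x - Inf S + f (Inf S))"

lemma gapp_unique:
  assumes "gapp S l1 u1" "l1 < x" "x < u1" "gapp S l2 u2" "l2 < x" "x < u2"
  shows "l1 = l2 \<and> u1 = u2"
proof -
  have "l1 \<le> l2" using assms unfolding gapp_def by force
  moreover have "l2 \<le> l1" using assms unfolding gapp_def by force
  moreover have "u1 \<le> u2" using assms unfolding gapp_def by force
  moreover have "u2 \<le> u1" using assms unfolding gapp_def by force
  ultimately show ?thesis by auto
qed

locale extc =
  fixes S S' :: "real set" and f :: "real \<Rightarrow> real"
  assumes gS: "good S" and gS': "good S'" and smo: "strict_mono_on S f" and img: "f ` S = S'"
begin

lemma f_lt: "s \<in> S \<Longrightarrow> t \<in> S \<Longrightarrow> s < t \<Longrightarrow> f s < f t"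
  using smo by (simp add: strict_mono_on_def)
lemma f_le: "s \<in> S \<Longrightarrow> t \<in> S \<Longrightarrow> s \<le> t \<Longrightarrow> f s \<le> f t"
  using f_lt by (metis order_le_less)
lemma f_lt_iff: "s \<in> S \<Longrightarrow> t \<in> S \<Longrightarrow> f s < f t \<longleftrightarrow> s < t"
  using f_lt f_le by (metis not_less)
lemma f_le_iff: "s \<in> S \<Longrightarrow> t \<in> S \<Longrightarrow> f s \<le> f t \<longleftrightarrow> s \<le> t"
  using f_lt f_le by (metis not_less)

lemma h_gap:
  assumes g: "gapp S l u" and x: "l \<le> x" "x \<le> u"
  shows "extf S f x = f l + (x - l) / (u - l) * (f u - f l)"
proof -
  have lS: "l \<in> S" and uS: "u \<in> S" and lu: "l < u" and sep: "\<forall>s\<in>S. s \<le> l \<or> u \<le> s"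
    using g by (auto simp: gapp_def)
  have hull: "(\<exists>s\<in>S. s \<le> x) \<and> (\<exists>s\<in>S. x \<le> s)" using lS uS x by auto
  show ?thesis
  proof (cases "l < x \<and> x < u")
    case True
    define p where "p = (SOME p. gapp S (fst p) (snd p) \<and> fst p < x \<and> x < snd p)"
    have "\<exists>p. gapp S (fst p) (snd p) \<and> fst p < x \<and> x < snd p"
      using g True by (intro exI[of _ "(l,u)"]) auto
    hence p: "gapp S (fst p) (snd p) \<and> fst p < x \<and> x < snd p"
      unfolding p_def by (rule someI_ex)
    have "fst p = l \<and> snd p = u" by (rule gapp_unique) (use p g True in auto)
    moreover have "\<exists>l u. gapp S l u \<and> l < x \<and> x < u" using g True by auto
    ultimately show ?thesis unfolding extf_def if_P[OF hull] if_P[OF \<open>\<exists>l u. _\<close>] p_def[symmetric] by (simp add: Let_def)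
  next
    case False
    hence xS: "x \<in> S" and xe: "x = l \<or> x = u" using x lS uS by auto
    have nog: "\<not> (\<exists>l u. gapp S l u \<and> l < x \<and> x < u)"
      using xS unfolding gapp_def by force
    have "Sup (f ` {s\<in>S. s \<le> x}) = f x"
      by (rule cSup_eq_maximum) (use xS f_le in auto)
    hence "extf S f x = f x" unfolding extf_def if_P[OF hull] if_not_P[OF nog] .
    thus ?thesis using xe lu by auto
  qed
qed

lemma h_S: "s \<in> S \<Longrightarrow> extf S f s = f s"
proof -
  assume xS: "s \<in> S"
  have hull: "(\<exists>t\<in>S. t \<le> s) \<and> (\<exists>t\<in>S. s \<le> t)" using xS by auto
  have nog: "\<not> (\<exists>l u. gapp S l u \<and> l < s \<and> s < u)"
    using xS unfolding gapp_def by force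
  have "Sup (f ` {t\<in>S. t \<le> s}) = f s"
    by (rule cSup_eq_maximum) (use xS f_le in auto)
  thus ?thesis unfolding extf_def if_P[OF hull] if_not_P[OF nog] .
qed

lemma good_hull: "(\<exists>s\<in>S. s \<le> x) \<Longrightarrow> (\<exists>s\<in>S. x \<le> s) \<Longrightarrow>
       (\<exists>l u. gapp S l u \<and> l < x \<and> x < u) \<or>
       ((\<forall>\<epsilon>>0. \<exists>s\<in>S. x - \<epsilon> < s \<and> s \<le> x) \<and> (\<forall>\<epsilon>>0. \<exists>s\<in>S. x \<le> s \<and> s < x + \<epsilon>))"
  using conjunct1[OF gS[unfolded good_def]] by blast

lemma good_max: "S \<noteq> {} \<Longrightarrow> bdd_above S \<Longrightarrow> \<exists>m\<in>S. \<forall>s\<in>S. s \<le> m"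
  using conjunct1[OF conjunct2[OF gS[unfolded good_def]]] by blast
lemma good_min: "S \<noteq> {} \<Longrightarrow> bdd_below S \<Longrightarrow> \<exists>m\<in>S. \<forall>s\<in>S. m \<le> s"
  using conjunct2[OF conjunct2[OF gS[unfolded good_def]]] by blast

lemma h_above: assumes "\<exists>s\<in>S. s \<le> x" "\<not> (\<exists>s\<in>S. x \<le> s)"
  obtains m where "m \<in> S" "\<forall>s\<in>S. s \<le> m" "m < x" "extf S f x = x - m + f m"
proof -
  have "S \<noteq> {}" "bdd_above S" using assms by (auto intro!: bdd_aboveI[of _ x])
  then obtain m where m: "m \<in> S" "\<forall>s\<in>S. s \<le> m" using good_max by blast
  have "Sup S = m" using m by (intro cSup_eq_maximum) auto
  moreover have "m < x" using m assms by force
  ultimately show ?thesis using that m assms unfolding extf_def by auto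
qed

lemma h_below: assumes "\<not> (\<exists>s\<in>S. s \<le> x)" "S \<noteq> {}"
  obtains m where "m \<in> S" "\<forall>s\<in>S. m \<le> s" "x < m" "extf S f x = x - m + f m"
proof -
  have "bdd_below S" using assms by (auto intro!: bdd_belowI[of _ x])
  then obtain m where m: "m \<in> S" "\<forall>s\<in>S. m \<le> s" using good_min assms by blast
  have "Inf S = m" using m by (intro cInf_eq_minimum) auto
  moreover have "x < m" using m assms by force
  ultimately show ?thesis using that m assms unfolding extf_def by auto
qed

lemma sup_bdd: "t \<in> S \<Longrightarrow> x \<le> t \<Longrightarrow> bdd_above (f ` {s\<in>S. s \<le> x})"
  by (rule bdd_aboveI[of _ "f t"]) (auto intro: f_le)

lemma h_gt: assumes sS: "s \<in> S" and sx: "s < x" shows "f s < extf S f x"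
proof (cases "\<exists>t\<in>S. x \<le> t")
  case True
  then obtain t where tS: "t \<in> S" "x \<le> t" by blast
  have h1: "\<exists>s\<in>S. s \<le> x" using sS sx less_imp_le by blast
  from good_hull[OF h1 True] show ?thesis
  proof
    assume "\<exists>l u. gapp S l u \<and> l < x \<and> x < u"
    then obtain l u where g: "gapp S l u" "l < x" "x < u" by blast
    have e: "extf S f x = f l + (x - l) / (u - l) * (f u - f l)" using h_gap g by auto
    have lS: "l \<in> S" "u \<in> S" "l < u" using g by (auto simp: gapp_def)
    have "s \<le> l" using g sS sx unfolding gapp_def by force
    hence "f s \<le> f l" using f_le sS lS by auto
    moreover have "0 < (x - l) / (u - l) * (f u - f l)"
    proof (rule mult_pos_pos)
      show "0 < (x - l) / (u - l)" using g lS by simp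
      show "0 < f u - f l" using f_lt[OF lS] by simp
    qed
    moreover have "\<And>a b c d. a \<le> b \<Longrightarrow> 0 < c \<Longrightarrow> d = b + c \<Longrightarrow> a < (d::real)" by linarith
    ultimately show ?thesis using e by blast
  next
    assume A: "(\<forall>\<epsilon>>0. \<exists>s\<in>S. x - \<epsilon> < s \<and> s \<le> x) \<and> (\<forall>\<epsilon>>0. \<exists>s\<in>S. x \<le> s \<and> s < x + \<epsilon>)"
    hence A1: "\<forall>\<epsilon>>0. \<exists>s\<in>S. x - \<epsilon> < s \<and> s \<le> x" by blast
    from A1[rule_format, of "x - s"] sx obtain s' where s': "s' \<in> S" "x - (x - s) < s'" "s' \<le> x" by auto
    have nog: "\<not> (\<exists>l u. gapp S l u \<and> l < x \<and> x < u)"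
    proof -
      have False if "gapp S l u" "l < x" "x < u" for l u
      proof -
        from A1[rule_format, of "x - l"] that obtain s'' where "s'' \<in> S" "x - (x - l) < s''" "s'' \<le> x"
          by auto
        thus False using that unfolding gapp_def by force
      qed
      thus ?thesis by blast
    qed
    have "f s < f s'" using f_lt sS s' by auto
    also have "f s' \<le> Sup (f ` {s\<in>S. s \<le> x})"
      by (rule cSup_upper) (use s' sup_bdd[OF tS] in auto)
    also have "\<dots> = extf S f x" unfolding extf_def if_P[OF conjI[OF h1 True]] if_not_P[OF nog] ..
    finally show ?thesis .
  qed
next
  case False
  have h1: "\<exists>s\<in>S. s \<le> x" using sS sx less_imp_le by blast
  obtain m where m: "m \<in> S" "\<forall>s\<in>S. s \<le> m" "m < x" "extf S f x = x - m + f m"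
    using h_above[OF h1 False] by blast
  have "f s \<le> f m" using f_le[OF sS m(1)] m(2) sS by blast
  thus ?thesis using m(3,4) by linarith
qed

lemma h_lt: assumes sS: "s \<in> S" and sx: "x < s" shows "extf S f x < f s"
proof (cases "\<exists>t\<in>S. t \<le> x")
  case True
  have h1: "\<exists>s\<in>S. x \<le> s" using sS sx less_imp_le by blast
  from good_hull[OF True h1] show ?thesis
  proof
    assume "\<exists>l u. gapp S l u \<and> l < x \<and> x < u"
    then obtain l u where g: "gapp S l u" "l < x" "x < u" by blast
    have e: "extf S f x = f l + (x - l) / (u - l) * (f u - f l)" using h_gap g by auto
    have lS: "l \<in> S" "u \<in> S" "l < u" using g by (auto simp: gapp_def)
    have "u \<le> s" using g sS sx unfolding gapp_def by force
    hence "f u \<le> f s" using f_le sS lS by auto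
    moreover have "(x - l) / (u - l) < 1" using g lS by auto
    moreover have "f l < f u" using f_lt lS by auto
    ultimately have "(x - l) / (u - l) * (f u - f l) < 1 * (f u - f l)"
      by (intro mult_strict_right_mono) auto
    hence "(x - l) / (u - l) * (f u - f l) < f u - f l" by (simp only: mult_1)
    moreover have "\<And>a b c d e. a = b + c \<Longrightarrow> c < d - b \<Longrightarrow> d \<le> e \<Longrightarrow> a < (e::real)" by linarith
    ultimately show ?thesis using e \<open>f u \<le> f s\<close> by blast
  next
    assume A: "(\<forall>\<epsilon>>0. \<exists>s\<in>S. x - \<epsilon> < s \<and> s \<le> x) \<and> (\<forall>\<epsilon>>0. \<exists>s\<in>S. x \<le> s \<and> s < x + \<epsilon>)"
    hence A1: "\<forall>\<epsilon>>0. \<exists>s\<in>S. x - \<epsilon> < s \<and> s \<le> x" and A2: "\<forall>\<epsilon>>0. \<exists>s\<in>S. x \<le> s \<and> s < x + \<epsilon>" by blast+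
    from A2[rule_format, of "s - x"] sx obtain s' where s': "s' \<in> S" "x \<le> s'" "s' < x + (s - x)" by auto
    have nog: "\<not> (\<exists>l u. gapp S l u \<and> l < x \<and> x < u)"
    proof -
      have False if "gapp S l u" "l < x" "x < u" for l u
      proof -
        from A1[rule_format, of "x - l"] that obtain s'' where "s'' \<in> S" "x - (x - l) < s''" "s'' \<le> x"
          by auto
        thus False using that unfolding gapp_def by force
      qed
      thus ?thesis by blast
    qed
    have "extf S f x = Sup (f ` {s\<in>S. s \<le> x})" unfolding extf_def if_P[OF conjI[OF True h1]] if_not_P[OF nog] ..
    also have "\<dots> \<le> f s'"
      by (rule cSup_least) (use True s' f_le in auto)
    also have "f s' < f s" using f_lt sS s' by auto
    finally show ?thesis .
  qed
next
  case False
  have "S \<noteq> {}" using sS by auto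
  obtain m where m: "m \<in> S" "\<forall>s\<in>S. m \<le> s" "x < m" "extf S f x = x - m + f m"
    using h_below[OF False \<open>S \<noteq> {}\<close>] by blast
  have "f m \<le> f s" using f_le[OF m(1) sS] m(2) sS by blast
  thus ?thesis using m(3,4) by linarith
qed

lemma h_mono: "strict_mono (extf S f)"
proof (rule strict_monoI)
  fix x y :: real assume xy: "x < y"
  show "extf S f x < extf S f y"
  proof (cases "\<exists>s\<in>S. x \<le> s \<and> s \<le> y")
    case True
    then obtain s where s: "s \<in> S" "x \<le> s" "s \<le> y" by blast
    show ?thesis
    proof (cases "s = x")
      case True
      thus ?thesis using h_S h_gt s xy by auto
    next
      case False
      hence "extf S f x < f s" using h_lt s by auto
      also have "f s \<le> extf S f y" using h_S h_gt s by (cases "s = y") (auto intro: less_imp_le)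
      finally show ?thesis .
    qed
  next
    case False
    note none = False
    show ?thesis
    proof (cases "(\<exists>t\<in>S. t \<le> x) \<and> (\<exists>t\<in>S. y \<le> t)")
      case True
      have h1a: "\<exists>t\<in>S. t \<le> x" using True by blast
      obtain t0 where "t0 \<in> S" "y \<le> t0" using True by blast
      hence h1b: "\<exists>t\<in>S. x \<le> t" using xy by (intro bexI[of _ t0]) auto
      note h1 = h1a h1b
      from good_hull[OF h1] obtain l u where g: "gapp S l u" "l < x" "x < u"
      proof
        assume "\<exists>l u. gapp S l u \<and> l < x \<and> x < u"
        then obtain l u where "gapp S l u" "l < x" "x < u" by blast
        thus ?thesis by (rule that)
      next
        assume "(\<forall>\<epsilon>>0. \<exists>s\<in>S. x - \<epsilon> < s \<and> s \<le> x) \<and> (\<forall>\<epsilon>>0. \<exists>s\<in>S. x \<le> s \<and> s < x + \<epsilon>)"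
        hence "\<forall>\<epsilon>>0. \<exists>s\<in>S. x \<le> s \<and> s < x + \<epsilon>" by blast
        from this[rule_format, of "y - x"] xy have "\<exists>s\<in>S. x \<le> s \<and> s < x + (y - x)" by simp
        then obtain s where "s \<in> S" "x \<le> s" "s < y" by auto
        hence "s \<le> y" by simp
        thus ?thesis using none \<open>s \<in> S\<close> \<open>x \<le> s\<close> by blast
      qed
      have lS: "l \<in> S" "u \<in> S" "l < u" using g by (auto simp: gapp_def)
      have "y < u"
      proof (rule ccontr)
        assume "\<not> y < u" hence "u \<le> y" by simp
        thus False using none lS(2) g(3) by auto
      qed
      have ex: "extf S f x = f l + (x - l) / (u - l) * (f u - f l)" using h_gap g by auto
      have ey: "extf S f y = f l + (y - l) / (u - l) * (f u - f l)" using h_gap g \<open>y < u\<close> xy by auto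
      have "(x - l) / (u - l) < (y - l) / (u - l)" using xy lS by (simp add: divide_strict_right_mono)
      moreover have "f l < f u" using f_lt lS by auto
      ultimately have "(x - l) / (u - l) * (f u - f l) < (y - l) / (u - l) * (f u - f l)"
        by (intro mult_strict_right_mono) auto
      thus ?thesis unfolding ex ey by (rule add_strict_left_mono)
    next
      case False
      show ?thesis
      proof (cases "\<exists>t\<in>S. t \<le> x")
        case True
        hence n1: "\<not> (\<exists>t\<in>S. y \<le> t)" using False by blast
        have n2: "\<not> (\<exists>t\<in>S. x \<le> t)"
        proof
          assume "\<exists>t\<in>S. x \<le> t"
          then obtain t where t: "t \<in> S" "x \<le> t" by blast
          show False
          proof (cases "t \<le> y")
            case True thus False using none t by blast
          next
            case False thus False using n1 t by force
          qed
        qed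
        obtain t0 where "t0 \<in> S" "t0 \<le> x" using True by blast
        hence t2: "\<exists>t\<in>S. t \<le> y" using xy by (intro bexI[of _ t0]) auto
        have "extf S f x = x - Sup S + f (Sup S)" unfolding extf_def using True n2 by auto
        moreover have "extf S f y = y - Sup S + f (Sup S)" unfolding extf_def using t2 n1 by auto
        ultimately show ?thesis using xy by simp
      next
        case F2: False
        have n2: "\<not> (\<exists>t\<in>S. t \<le> y)"
        proof
          assume "\<exists>t\<in>S. t \<le> y"
          then obtain t where t: "t \<in> S" "t \<le> y" by blast
          show False
          proof (cases "x \<le> t")
            case True thus False using none t by blast
          next
            case False thus False using F2 t by force
          qed
        qed
        have "extf S f x = x - Inf S + f (Inf S)" unfolding extf_def using F2 by auto
        moreover have "extf S f y = y - Inf S + f (Inf S)" unfolding extf_def using n2 by auto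
        ultimately show ?thesis using xy by simp
      qed
    qed
  qed
qed

lemma f_gapp: assumes "gapp S' l' u'" shows "\<exists>l u. gapp S l u \<and> l' = f l \<and> u' = f u"
proof -
  have "l' \<in> f ` S" "u' \<in> f ` S" using assms img by (auto simp: gapp_def)
  then obtain l u where lu: "l \<in> S" "u \<in> S" "l' = f l" "u' = f u" by blast
  have "gapp S l u" unfolding gapp_def
  proof (intro conjI ballI)
    have "l' < u'" using assms by (simp add: gapp_def)
    thus "l < u" using lu f_lt_iff by simp
    fix s assume sS: "s \<in> S"
    have "f s \<in> S'" using img sS by blast
    hence "f s \<le> l' \<or> u' \<le> f s" using assms unfolding gapp_def by blast
    thus "s \<le> l \<or> u \<le> s" using lu f_le_iff[OF sS lu(1)] f_le_iff[OF lu(2) sS] by auto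
  qed (rule lu(1), rule lu(2))
  thus ?thesis using lu by blast
qed

end

context extc
begin
lemma h_surj: "surj (extf S f)"
proof (rule surjI[of _ "\<lambda>y. SOME x. extf S f x = y"], rule someI_ex)
  fix y :: real
  show "\<exists>x. extf S f x = y"
  proof (cases "\<exists>s\<in>S. f s = y")
    case True
    thus ?thesis using h_S by auto
  next
    case notS: False
    have gS'h: "(\<exists>l u. gapp S' l u \<and> l < y \<and> y < u) \<or>
       ((\<forall>\<epsilon>>0. \<exists>s\<in>S'. y - \<epsilon> < s \<and> s \<le> y) \<and> (\<forall>\<epsilon>>0. \<exists>s\<in>S'. y \<le> s \<and> s < y + \<epsilon>))"
      if "\<exists>s\<in>S'. s \<le> y" "\<exists>s\<in>S'. y \<le> s"
      using conjunct1[OF gS'[unfolded good_def]] that by blast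
    show ?thesis
    proof (cases "(\<exists>s\<in>S. f s \<le> y) \<and> (\<exists>s\<in>S. y \<le> f s)")
      case True
      hence "\<exists>s\<in>S'. s \<le> y" "\<exists>s\<in>S'. y \<le> s" using img by auto
      from gS'h[OF this] show ?thesis
      proof
        assume "\<exists>l u. gapp S' l u \<and> l < y \<and> y < u"
        then obtain l' u' where g': "gapp S' l' u'" "l' < y" "y < u'" by blast
        obtain l u where g: "gapp S l u" "l' = f l" "u' = f u" using f_gapp[OF g'(1)] by blast
        have lS: "l \<in> S" "u \<in> S" "l < u" using g by (auto simp: gapp_def)
        have fl: "f l < f u" using f_lt lS by auto
        define x where "x = l + (y - f l) / (f u - f l) * (u - l)"
        have t0: "0 < (y - f l) / (f u - f l)" using g g' fl by auto
        have t1: "(y - f l) / (f u - f l) < 1" using g g' fl by auto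
        have "0 < (y - f l) / (f u - f l) * (u - l)" using t0 lS by (intro mult_pos_pos) auto
        hence "l < x" unfolding x_def by linarith
        moreover have "x < u"
        proof -
          have "(y - f l) / (f u - f l) * (u - l) < 1 * (u - l)"
            using t1 lS by (intro mult_strict_right_mono) auto
          thus ?thesis unfolding x_def by simp
        qed
        ultimately have "extf S f x = f l + (x - l) / (u - l) * (f u - f l)" using h_gap g by auto
        also have "(x - l) / (u - l) = (y - f l) / (f u - f l)" unfolding x_def using lS by simp
        also have "f l + (y - f l) / (f u - f l) * (f u - f l) = y" using fl by simp
        finally show ?thesis by blast
      next
        assume A: "(\<forall>\<epsilon>>0. \<exists>s\<in>S'. y - \<epsilon> < s \<and> s \<le> y) \<and> (\<forall>\<epsilon>>0. \<exists>s\<in>S'. y \<le> s \<and> s < y + \<epsilon>)"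
        hence A1: "\<forall>\<epsilon>>0. \<exists>s\<in>S'. y - \<epsilon> < s \<and> s \<le> y" and A2: "\<forall>\<epsilon>>0. \<exists>s\<in>S'. y \<le> s \<and> s < y + \<epsilon>" by blast+
        obtain t where t: "t \<in> S" "y \<le> f t" using True by blast
        have "f t \<noteq> y" using t notS by blast
        hence ty: "y < f t" using t by simp
        define B where "B = {s\<in>S. f s \<le> y}"
        have Bne: "B \<noteq> {}" using True unfolding B_def by auto
        have Bbdd: "bdd_above B"
        proof (rule bdd_aboveI[of _ t])
          fix b assume "b \<in> B"
          hence b: "b \<in> S" "f b \<le> y" unfolding B_def by auto
          hence "f b \<le> f t" using ty by linarith
          thus "b \<le> t" using f_le_iff[OF b(1) t(1)] by simp
        qed
        define x where "x = Sup B"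
        have "extf S f x = y"
        proof (rule ccontr)
          assume ne: "extf S f x \<noteq> y"
          show False
          proof (cases "extf S f x < y")
            case True
            from A1[rule_format, of "y - extf S f x"] True
            obtain s' where s': "s' \<in> S'" "y - (y - extf S f x) < s'" "s' \<le> y" by auto
            then obtain s where s: "s \<in> S" "f s = s'" using img by auto
            have "s \<in> B" using s s' unfolding B_def by auto
            hence "s \<le> x" unfolding x_def using Bbdd by (rule cSup_upper)
            thus False using h_gt[of s x] h_S[of s] s s' by (cases "s = x") auto
          next
            case False
            hence gt: "y < extf S f x" using ne by auto
            from A2[rule_format, of "extf S f x - y"] gt
            obtain s' where s': "s' \<in> S'" "y \<le> s'" "s' < y + (extf S f x - y)" by auto
            then obtain s where s: "s \<in> S" "f s = s'" using img by auto
            have "f s \<noteq> y" using s notS by blast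
            hence "y < f s" using s s' by simp
            have "\<forall>b\<in>B. b \<le> s"
            proof
              fix b assume "b \<in> B"
              hence b: "b \<in> S" "f b \<le> y" unfolding B_def by auto
              hence "f b < f s" using \<open>y < f s\<close> by linarith
              thus "b \<le> s" using f_lt_iff[OF b(1) s(1)] by simp
            qed
            hence "x \<le> s" unfolding x_def using Bne by (intro cSup_least) auto
            thus False using h_lt[of s x] h_S[of s] s s' by (cases "s = x") auto
          qed
        qed
        thus ?thesis by blast
      qed
    next
      case False
      show ?thesis
      proof (cases "\<exists>s\<in>S. f s \<le> y")
        case True
        hence n1: "\<not> (\<exists>s\<in>S. y \<le> f s)" using False by blast
        obtain s0 where s0: "s0 \<in> S" "f s0 \<le> y" using True by blast
        have "S' \<noteq> {}" using s0 img by blast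
        moreover have "bdd_above S'"
        proof (rule bdd_aboveI[of _ y])
          fix z assume "z \<in> S'"
          then obtain s where "s \<in> S" "z = f s" using img by blast
          thus "z \<le> y" using n1 by force
        qed
        ultimately obtain m' where m': "m' \<in> S'" "\<forall>s\<in>S'. s \<le> m'"
          using conjunct1[OF conjunct2[OF gS'[unfolded good_def]]] by blast
        then obtain m where m: "m \<in> S" "f m = m'" using img by blast
        have mx: "\<forall>s\<in>S. s \<le> m"
        proof
          fix s assume sS: "s \<in> S"
          hence "f s \<in> S'" using img by blast
          hence "f s \<le> f m" using m' m by simp
          thus "s \<le> m" using f_le_iff[OF sS m(1)] by simp
        qed
        define x where "x = y - f m + m"
        have "\<not> y \<le> f m" using n1 m(1) by blast
        hence "f m < y" by simp
        hence "m < x" unfolding x_def by simp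
        have n2: "\<not> (\<exists>s\<in>S. x \<le> s)"
        proof
          assume "\<exists>s\<in>S. x \<le> s"
          then obtain s where "s \<in> S" "x \<le> s" by blast
          thus False using mx \<open>m < x\<close> by fastforce
        qed
        have "\<exists>s\<in>S. s \<le> x" using \<open>m < x\<close> m(1) by (intro bexI[of _ m]) auto
        then obtain m2 where m2: "m2 \<in> S" "\<forall>s\<in>S. s \<le> m2" "m2 < x" "extf S f x = x - m2 + f m2"
          by (rule h_above[OF _ n2])
        have "m2 \<le> m" "m \<le> m2" using mx m2 m(1) by blast+
        hence "m2 = m" by simp
        hence "extf S f x = y" using m2(4) unfolding x_def by simp
        thus ?thesis by blast
      next
        case F2: False
        show ?thesis
        proof (cases "S = {}")
          case True
          have "extf S f (y + Inf S - f (Inf S)) = y" unfolding extf_def using True by simp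
          thus ?thesis by blast
        next
          case False
          obtain s0 where s0: "s0 \<in> S" using False by blast
          have "S' \<noteq> {}" using s0 img by blast
          moreover have "bdd_below S'"
          proof (rule bdd_belowI[of _ y])
            fix z assume "z \<in> S'"
            then obtain s where "s \<in> S" "z = f s" using img by blast
            thus "y \<le> z" using F2 by force
          qed
          ultimately obtain m' where m': "m' \<in> S'" "\<forall>s\<in>S'. m' \<le> s"
            using conjunct2[OF conjunct2[OF gS'[unfolded good_def]]] by blast
          then obtain m where m: "m \<in> S" "f m = m'" using img by blast
          have mx: "\<forall>s\<in>S. m \<le> s"
          proof
            fix s assume sS: "s \<in> S"
            hence "f s \<in> S'" using img by blast
            hence "f m \<le> f s" using m' m by simp
            thus "m \<le> s" using f_le_iff[OF m(1) sS] by simp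
          qed
          define x where "x = y - f m + m"
          have "\<not> f m \<le> y" using F2 m(1) by blast
          hence "y < f m" by simp
          hence "x < m" unfolding x_def by simp
          have n2: "\<not> (\<exists>s\<in>S. s \<le> x)"
          proof
            assume "\<exists>s\<in>S. s \<le> x"
            then obtain s where "s \<in> S" "s \<le> x" by blast
            thus False using mx \<open>x < m\<close> by fastforce
          qed
          obtain m2 where m2: "m2 \<in> S" "\<forall>s\<in>S. m2 \<le> s" "x < m2" "extf S f x = x - m2 + f m2"
            by (rule h_below[OF n2 False])
          have "m2 \<le> m" "m \<le> m2" using mx m2 m(1) by blast+
          hence "m2 = m" by simp
          hence "extf S f x = y" using m2(4) unfolding x_def by simp
          thus ?thesis by blast
        qed
      qed
    qed
  qed
qed

end

locale dvl =
  fixes Q :: "'a set" and lt :: "'a \<Rightarrow> 'a \<Rightarrow> bool" and e :: "nat \<Rightarrow> 'a" and v :: "nat \<Rightarrow> real"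
  assumes irr: "\<forall>q\<in>Q. \<not> lt q q"
    and trn: "\<forall>q\<in>Q. \<forall>r\<in>Q. \<forall>s\<in>Q. lt q r \<longrightarrow> lt r s \<longrightarrow> lt q s"
    and tot: "\<forall>q\<in>Q. \<forall>r\<in>Q. q \<noteq> r \<longrightarrow> lt q r \<or> lt r q"
    and en: "enumeration Q e" and dv: "dyn_values Q lt e v"
begin

lemma dom_down: "n \<in> enum_dom Q \<Longrightarrow> i \<le> n \<Longrightarrow> i \<in> enum_dom Q"
  unfolding enum_dom_def by (auto split: if_splits)

lemma e_in: "i \<in> enum_dom Q \<Longrightarrow> e i \<in> Q"
  using en unfolding enumeration_def bij_betw_def by auto

lemma e_inj: "i \<in> enum_dom Q \<Longrightarrow> j \<in> enum_dom Q \<Longrightarrow> e i = e j \<Longrightarrow> i = j"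
  using en unfolding enumeration_def bij_betw_def inj_on_def by auto

lemma cases_at:
  assumes "m \<in> enum_dom Q" "0 < m"
  shows "((\<forall>i<m. lt (e m) (e i)) \<and> v m = Min (v ` {..<m}) - 1) \<or>
        (\<not>(\<forall>i<m. lt (e m) (e i)) \<and> (\<forall>i<m. lt (e i) (e m)) \<and> v m = Max (v ` {..<m}) + 1) \<or>
        (\<not>(\<forall>i<m. lt (e m) (e i)) \<and> \<not>(\<forall>i<m. lt (e i) (e m)) \<and>
          (\<exists>a<m. \<exists>b<m. lt (e a) (e m) \<and> lt (e m) (e b) \<and>
                (\<forall>i<m. \<not> (lt (e a) (e i) \<and> lt (e i) (e m))) \<and>
                (\<forall>i<m. \<not> (lt (e m) (e i) \<and> lt (e i) (e b))) \<and>
                v m = (v a + v b) / 2))"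
proof -
  have H: "if \<forall>i<m. lt (e m) (e i) then v m = Min (v ` {..<m}) - 1
        else if \<forall>i<m. lt (e i) (e m) then v m = Max (v ` {..<m}) + 1
        else (\<exists>a<m. \<exists>b<m. lt (e a) (e m) \<and> lt (e m) (e b) \<and>
                (\<forall>i<m. \<not> (lt (e a) (e i) \<and> lt (e i) (e m))) \<and>
                (\<forall>i<m. \<not> (lt (e m) (e i) \<and> lt (e i) (e b))) \<and>
                v m = (v a + v b) / 2)"
    using dv assms unfolding dyn_values_def by blast
  show ?thesis
  proof (cases "\<forall>i<m. lt (e m) (e i)")
    case True thus ?thesis using H by simp
  next
    case F1: False
    show ?thesis
    proof (cases "\<forall>i<m. lt (e i) (e m)")
      case True thus ?thesis using H F1 by simp
    next
      case False
      hence "\<exists>a<m. \<exists>b<m. lt (e a) (e m) \<and> lt (e m) (e b) \<and>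
                (\<forall>i<m. \<not> (lt (e a) (e i) \<and> lt (e i) (e m))) \<and>
                (\<forall>i<m. \<not> (lt (e m) (e i) \<and> lt (e i) (e b))) \<and>
                v m = (v a + v b) / 2" using H F1 by argo
      thus ?thesis using F1 False by blast
    qed
  qed
qed

lemma asym: "q \<in> Q \<Longrightarrow> r \<in> Q \<Longrightarrow> lt q r \<Longrightarrow> lt r q \<Longrightarrow> False"
  using irr trn by blast

lemma mono_aux: "n \<in> enum_dom Q \<Longrightarrow> i \<le> n \<Longrightarrow> j \<le> n \<Longrightarrow> lt (e i) (e j) \<Longrightarrow> v i < v j"
proof (induction n arbitrary: i j)
  case 0
  then have "i = 0" "j = 0" by auto
  with 0 show ?case using irr e_in by auto
next
  case (Suc n)
  have nD: "n \<in> enum_dom Q" using Suc.prems(1) dom_down by auto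
  have IH: "\<And>i j. i \<le> n \<Longrightarrow> j \<le> n \<Longrightarrow> lt (e i) (e j) \<Longrightarrow> v i < v j" using Suc.IH nD by blast
  define m where "m = Suc n"
  have mD: "m \<in> enum_dom Q" using Suc.prems m_def by simp
  have key: "(lt (e i) (e m) \<longrightarrow> v i < v m) \<and> (lt (e m) (e i) \<longrightarrow> v m < v i)" if im: "i < m" for i
  proof -
    have iD: "i \<in> enum_dom Q" using mD dom_down im by auto
    have fin: "finite (v ` {..<m})" by simp
    have iin: "v i \<in> v ` {..<m}" using im by simp
    have eiQ: "e i \<in> Q" and emQ: "e m \<in> Q" using e_in iD mD by auto
    from cases_at[OF mD] consider
      (c1) "(\<forall>k<m. lt (e m) (e k))" "v m = Min (v ` {..<m}) - 1"
    | (c2) "(\<forall>k<m. lt (e k) (e m))" "v m = Max (v ` {..<m}) + 1"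
    | (c3) a b where "a < m" "b < m" "lt (e a) (e m)" "lt (e m) (e b)"
        "(\<forall>k<m. \<not> (lt (e a) (e k) \<and> lt (e k) (e m)))"
        "(\<forall>k<m. \<not> (lt (e m) (e k) \<and> lt (e k) (e b)))" "v m = (v a + v b) / 2"
      using m_def by auto
    then show ?thesis
    proof cases
      case c1
      have "Min (v ` {..<m}) \<le> v i" using Min_le[OF fin iin] .
      moreover have "\<not> lt (e i) (e m)" using c1(1) im asym eiQ emQ by blast
      ultimately show ?thesis using c1(2) by auto
    next
      case c2
      have "v i \<le> Max (v ` {..<m})" using Max_ge[OF fin iin] .
      moreover have "\<not> lt (e m) (e i)" using c2(1) im asym eiQ emQ by blast
      ultimately show ?thesis using c2(2) by auto
    next
      case c3
      have aD: "a \<in> enum_dom Q" and bD: "b \<in> enum_dom Q" using c3 mD dom_down by auto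
      have eaQ: "e a \<in> Q" and ebQ: "e b \<in> Q" using e_in aD bD by auto
      have "lt (e a) (e b)" using trn c3(3,4) eaQ ebQ emQ by blast
      hence ab: "v a < v b" using IH c3(1,2) m_def by auto
      have L: "v i \<le> v a" if "lt (e i) (e m)"
      proof (cases "i = a")
        case True thus ?thesis by simp
      next
        case False
        hence "e i \<noteq> e a" using e_inj iD aD by blast
        moreover have "\<not> lt (e a) (e i)" using c3(5) im that by blast
        ultimately have "lt (e i) (e a)" using tot eiQ eaQ by blast
        thus ?thesis using IH im c3(1) m_def by (auto intro: less_imp_le)
      qed
      have R: "v b \<le> v i" if "lt (e m) (e i)"
      proof (cases "i = b")
        case True thus ?thesis by simp
      next
        case False
        hence "e i \<noteq> e b" using e_inj iD bD by blast
        moreover have "\<not> lt (e i) (e b)" using c3(6) im that by blast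
        ultimately have "lt (e b) (e i)" using tot eiQ ebQ by blast
        thus ?thesis using IH im c3(2) m_def by (auto intro: less_imp_le)
      qed
      show ?thesis using L R ab c3(7) by auto
    qed
  qed
  show ?case
  proof (cases "i \<le> n \<and> j \<le> n")
    case True thus ?thesis using IH Suc.prems by blast
  next
    case False
    show ?thesis
    proof (cases "i = m \<and> j = m")
      case True thus ?thesis using Suc.prems irr e_in mD by auto
    next
      case False
      hence "(i < m \<and> j = m) \<or> (i = m \<and> j < m)" using \<open>\<not> (i \<le> n \<and> j \<le> n)\<close> Suc.prems m_def by auto
      thus ?thesis using key Suc.prems by auto
    qed
  qed
qed

lemma lt_iff: "i \<in> enum_dom Q \<Longrightarrow> j \<in> enum_dom Q \<Longrightarrow> v i < v j \<longleftrightarrow> lt (e i) (e j)"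
proof
  assume iD: "i \<in> enum_dom Q" and jD: "j \<in> enum_dom Q"
  show "lt (e i) (e j) \<Longrightarrow> v i < v j"
    using mono_aux[of "max i j" i j] iD jD by (auto simp: max_def)
  assume vij: "v i < v j"
  show "lt (e i) (e j)"
  proof (rule ccontr)
    assume nlt: "\<not> lt (e i) (e j)"
    have "i \<noteq> j" using vij by auto
    hence "e i \<noteq> e j" using e_inj iD jD by blast
    hence "lt (e j) (e i)" using tot e_in iD jD nlt by blast
    hence "v j < v i" using mono_aux[of "max i j" j i] iD jD by (auto simp: max_def)
    thus False using vij by simp
  qed
qed

lemma v_inj: "i \<in> enum_dom Q \<Longrightarrow> j \<in> enum_dom Q \<Longrightarrow> v i = v j \<Longrightarrow> i = j"
proof (rule ccontr)
  assume iD: "i \<in> enum_dom Q" and jD: "j \<in> enum_dom Q" and eq: "v i = v j" and ne: "i \<noteq> j"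
  hence "e i \<noteq> e j" using e_inj by blast
  hence "lt (e i) (e j) \<or> lt (e j) (e i)" using tot e_in iD jD by blast
  thus False using lt_iff[OF iD jD] lt_iff[OF jD iD] eq by auto
qed

end

context dvl
begin

lemma unbdd_above:
  assumes nomax: "\<forall>m\<in>v ` enum_dom Q. \<exists>s\<in>v ` enum_dom Q. m < s" and z: "0 \<in> enum_dom Q"
  shows "\<exists>n\<in>enum_dom Q. v 0 + real k \<le> v n"
proof (induction k)
  case 0 thus ?case using z by auto
next
  case (Suc k)
  then obtain n where nD: "n \<in> enum_dom Q" and nk: "v 0 + real k \<le> v n" by blast
  have sub: "{..n} \<subseteq> enum_dom Q" using nD dom_down by auto
  define c where "c = Max (v ` {..n})"
  have cin: "c \<in> v ` {..n}" unfolding c_def by (rule Max_in) auto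
  hence "c \<in> v ` enum_dom Q" using sub by auto
  then obtain s where "s \<in> v ` enum_dom Q" "c < s" using nomax by blast
  then obtain j where jD: "j \<in> enum_dom Q" "c < v j" by auto
  define W where "W = {k\<in>enum_dom Q. c < v k}"
  define m where "m = (LEAST k. k \<in> W)"
  have jW: "j \<in> W" using jD unfolding W_def by auto
  have mW: "m \<in> W" unfolding m_def by (rule LeastI[of _ j]) (rule jW)
  have least: "\<And>k. k \<in> W \<Longrightarrow> m \<le> k" unfolding m_def by (rule Least_le)
  have mD: "m \<in> enum_dom Q" and cm: "c < v m" using mW unfolding W_def by auto
  have le_c: "v i \<le> c" if "i \<le> n" for i unfolding c_def using that by (intro Max_ge) auto
  have nm: "n < m"
  proof (rule ccontr)
    assume "\<not> n < m" hence "m \<le> n" by simp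
    thus False using le_c cm by force
  qed
  have below: "v i < v m" if "i < m" for i
  proof (cases "i \<le> n")
    case True thus ?thesis using le_c cm by force
  next
    case False
    have iD: "i \<in> enum_dom Q" using that mD dom_down by auto
    have "i \<notin> W" using least that by force
    hence "v i \<le> c" using iD unfolding W_def by auto
    thus ?thesis using cm by simp
  qed
  have allb: "\<forall>i<m. lt (e i) (e m)"
  proof (intro allI impI)
    fix i assume "i < m"
    thus "lt (e i) (e m)" using below lt_iff mD dom_down[OF mD] by (meson less_imp_le)
  qed
  have nc1: "\<not> (\<forall>i<m. lt (e m) (e i))"
  proof
    assume "\<forall>i<m. lt (e m) (e i)"
    hence "lt (e m) (e 0)" using nm by auto
    moreover have "lt (e 0) (e m)" using allb nm by auto
    ultimately show False using asym e_in mD z by blast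
  qed
  have "v m = Max (v ` {..<m}) + 1" using cases_at[OF mD] nm nc1 allb by auto
  moreover have "v n \<le> Max (v ` {..<m})" using nm by (intro Max_ge) auto
  ultimately have "v 0 + real (Suc k) \<le> v m" using nk by simp
  thus ?case using mD by blast
qed

lemma unbdd_below:
  assumes nomin: "\<forall>m\<in>v ` enum_dom Q. \<exists>s\<in>v ` enum_dom Q. s < m" and z: "0 \<in> enum_dom Q"
  shows "\<exists>n\<in>enum_dom Q. v n \<le> v 0 - real k"
proof (induction k)
  case 0 thus ?case using z by auto
next
  case (Suc k)
  then obtain n where nD: "n \<in> enum_dom Q" and nk: "v n \<le> v 0 - real k" by blast
  have sub: "{..n} \<subseteq> enum_dom Q" using nD dom_down by auto
  define c where "c = Min (v ` {..n})"
  have cin: "c \<in> v ` {..n}" unfolding c_def by (rule Min_in) auto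
  hence "c \<in> v ` enum_dom Q" using sub by auto
  then obtain s where "s \<in> v ` enum_dom Q" "s < c" using nomin by blast
  then obtain j where jD: "j \<in> enum_dom Q" "v j < c" by auto
  define W where "W = {k\<in>enum_dom Q. v k < c}"
  define m where "m = (LEAST k. k \<in> W)"
  have jW: "j \<in> W" using jD unfolding W_def by auto
  have mW: "m \<in> W" unfolding m_def by (rule LeastI[of _ j]) (rule jW)
  have least: "\<And>k. k \<in> W \<Longrightarrow> m \<le> k" unfolding m_def by (rule Least_le)
  have mD: "m \<in> enum_dom Q" and cm: "v m < c" using mW unfolding W_def by auto
  have le_c: "c \<le> v i" if "i \<le> n" for i unfolding c_def using that by (intro Min_le) auto
  have nm: "n < m"
  proof (rule ccontr)
    assume "\<not> n < m" hence "m \<le> n" by simp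
    thus False using le_c cm by force
  qed
  have above: "v m < v i" if "i < m" for i
  proof (cases "i \<le> n")
    case True thus ?thesis using le_c cm by force
  next
    case False
    have iD: "i \<in> enum_dom Q" using that mD dom_down by auto
    have "i \<notin> W" using least that by force
    hence "c \<le> v i" using iD unfolding W_def by auto
    thus ?thesis using cm by simp
  qed
  have alla: "\<forall>i<m. lt (e m) (e i)"
  proof (intro allI impI)
    fix i assume "i < m"
    thus "lt (e m) (e i)" using above lt_iff mD dom_down[OF mD] by (meson less_imp_le)
  qed
  have "v m = Min (v ` {..<m}) - 1" using cases_at[OF mD] nm alla by auto
  moreover have "Min (v ` {..<m}) \<le> v n" using nm by (intro Min_le) auto
  ultimately have "v m \<le> v 0 - real (Suc k)" using nk by simp
  thus ?case using mD by blast
qed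

end

lemma arithA: fixes A B N I sg ep :: real
  assumes "ep \<le> B - N" "N \<le> sg" "N = (A+B)/2" "I \<le> A" "sg - ep/2 < I" "0<ep" shows False
proof -
  have "2*N = A+B" using assms(3) by simp
  moreover have "2 * sg - ep < 2 * I" using assms(5) by simp
  ultimately show False using assms(1,2,4,6) by linarith
qed
lemma arithB: fixes A B N I t ep :: real
  assumes "ep \<le> N - A" "t \<le> N" "N = (A+B)/2" "B \<le> I" "I < t + ep/2" "0<ep" shows False
proof -
  have "2*N = A+B" using assms(3) by simp
  moreover have "2*I < 2*t + ep" using assms(5) by simp
  ultimately show False using assms(1,2,4,6) by linarith
qed

context dvl
begin

lemma keyA:
  fixes x :: real
  assumes a0: "a0 \<in> enum_dom Q" "v a0 \<le> x" and b0: "b0 \<in> enum_dom Q" "x < v b0"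
    and nomax: "\<forall>i\<in>enum_dom Q. v i \<le> x \<longrightarrow> (\<exists>j\<in>enum_dom Q. v j \<le> x \<and> v i < v j)"
    and ep: "\<epsilon> > 0"
  shows "\<exists>i\<in>enum_dom Q. \<exists>j\<in>enum_dom Q. v i \<le> x \<and> x < v j \<and> v j - v i < \<epsilon>"
proof (rule ccontr)
  assume "\<not> ?thesis"
  hence H: "\<And>i j. i \<in> enum_dom Q \<Longrightarrow> j \<in> enum_dom Q \<Longrightarrow> v i \<le> x \<Longrightarrow> x < v j \<Longrightarrow> \<epsilon> \<le> v j - v i"
    by force
  define As where "As = v ` {i\<in>enum_dom Q. v i \<le> x}"
  have Ane: "As \<noteq> {}" using a0 unfolding As_def by auto
  have Abdd: "bdd_above As" unfolding As_def by (rule bdd_aboveI[of _ x]) auto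
  define \<sigma> where "\<sigma> = Sup As"
  have "\<sigma> - \<epsilon>/2 < \<sigma>" using ep by simp
  then obtain a1 where "a1 \<in> As" "\<sigma> - \<epsilon>/2 < a1" using less_cSupD[OF Ane] unfolding \<sigma>_def by blast
  then obtain i1 where i1: "i1 \<in> enum_dom Q" "v i1 \<le> x" "\<sigma> - \<epsilon>/2 < v i1" unfolding As_def by auto
  define M where "M = max i1 b0"
  have MD: "M \<in> enum_dom Q" using i1 b0 unfolding M_def by (auto simp: max_def)
  define F where "F = v ` {i. i \<le> M \<and> v i \<le> x}"
  have Ffin: "finite F" unfolding F_def by simp
  have i1F: "v i1 \<in> F" unfolding F_def M_def using i1 by auto
  define c where "c = Max F"
  have cF: "c \<in> F" unfolding c_def using Ffin i1F by (intro Max_in) auto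
  have geF: "\<And>z. z \<in> F \<Longrightarrow> z \<le> c" unfolding c_def using Ffin by auto
  obtain ic where ic: "ic \<le> M" "v ic \<le> x" "v ic = c" using cF unfolding F_def by auto
  have icD: "ic \<in> enum_dom Q" using dom_down MD ic by auto
  obtain j where jD: "j \<in> enum_dom Q" "v j \<le> x" "c < v j" using nomax icD ic by force
  define W where "W = {k\<in>enum_dom Q. v k \<le> x \<and> c < v k}"
  define n where "n = (LEAST k. k \<in> W)"
  have jW: "j \<in> W" using jD unfolding W_def by auto
  have nW: "n \<in> W" unfolding n_def by (rule LeastI[of _ j]) (rule jW)
  have least: "\<And>k. k \<in> W \<Longrightarrow> n \<le> k" unfolding n_def by (rule Least_le)
  have nD: "n \<in> enum_dom Q" and nx: "v n \<le> x" and cn: "c < v n" using nW unfolding W_def by auto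
  have Mn: "M < n"
  proof (rule ccontr)
    assume "\<not> M < n" hence "n \<le> M" by simp
    hence "v n \<in> F" unfolding F_def using nx by auto
    thus False using geF cn by force
  qed
  have i1n: "i1 < n" and b0n: "b0 < n" using Mn unfolding M_def by auto
  have vi1c: "v i1 \<le> c" using geF i1F by auto
  have lt_i1n: "lt (e i1) (e n)" using lt_iff[OF i1(1) nD] vi1c cn by simp
  from cases_at[OF nD] i1n consider
      (c1) "(\<forall>k<n. lt (e n) (e k))"
    | (c2) "(\<forall>k<n. lt (e k) (e n))"
    | (c3) a b where "a < n" "b < n" "lt (e a) (e n)" "lt (e n) (e b)"
        "(\<forall>k<n. \<not> (lt (e a) (e k) \<and> lt (e k) (e n)))"
        "(\<forall>k<n. \<not> (lt (e n) (e k) \<and> lt (e k) (e b)))" "v n = (v a + v b) / 2"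
    by auto
  then show False
  proof cases
    case c1
    hence "lt (e n) (e i1)" using i1n by auto
    thus False using asym e_in i1(1) nD lt_i1n by blast
  next
    case c2
    hence "lt (e b0) (e n)" using b0n by auto
    hence "v b0 < v n" using lt_iff[OF b0(1) nD] by simp
    thus False using nx b0 by simp
  next
    case c3
    have aD: "a \<in> enum_dom Q" and bD: "b \<in> enum_dom Q" using c3 nD dom_down by auto
    have "\<not> lt (e a) (e i1)" using c3(5) i1n lt_i1n by blast
    hence ai1: "v i1 \<le> v a" using lt_iff[OF aD i1(1)] by simp
    have nb: "v n < v b" using lt_iff[OF nD bD] c3(4) by simp
    have xb: "x < v b"
    proof (rule ccontr)
      assume "\<not> x < v b"
      hence "b \<in> W" unfolding W_def using bD nb cn by auto
      thus False using least c3(2) by force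
    qed
    have "\<epsilon> \<le> v b - v n" using H[OF nD bD nx xb] .
    moreover have "v n \<le> \<sigma>" unfolding \<sigma>_def by (rule cSup_upper[OF _ Abdd]) (use nD nx As_def in auto)
    ultimately show False using arithA[OF _ _ c3(7) ai1 i1(3) ep] by blast
  qed
qed

lemma keyB:
  fixes x :: real
  assumes a0: "a0 \<in> enum_dom Q" "v a0 \<le> x" and b0: "b0 \<in> enum_dom Q" "x < v b0"
    and nomin: "\<forall>j\<in>enum_dom Q. x < v j \<longrightarrow> (\<exists>i\<in>enum_dom Q. x < v i \<and> v i < v j)"
    and ep: "\<epsilon> > 0"
  shows "\<exists>i\<in>enum_dom Q. \<exists>j\<in>enum_dom Q. v i \<le> x \<and> x < v j \<and> v j - v i < \<epsilon>"
proof (rule ccontr)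
  assume "\<not> ?thesis"
  hence H: "\<And>i j. i \<in> enum_dom Q \<Longrightarrow> j \<in> enum_dom Q \<Longrightarrow> v i \<le> x \<Longrightarrow> x < v j \<Longrightarrow> \<epsilon> \<le> v j - v i"
    by force
  define Bs where "Bs = v ` {i\<in>enum_dom Q. x < v i}"
  have Bne: "Bs \<noteq> {}" using b0 unfolding Bs_def by auto
  have Bbdd: "bdd_below Bs" unfolding Bs_def by (rule bdd_belowI[of _ x]) auto
  define \<tau> where "\<tau> = Inf Bs"
  have "\<tau> < \<tau> + \<epsilon>/2" using ep by simp
  then obtain b1 where "b1 \<in> Bs" "b1 < \<tau> + \<epsilon>/2" using cInf_lessD[OF Bne] unfolding \<tau>_def by blast
  then obtain i1 where i1: "i1 \<in> enum_dom Q" "x < v i1" "v i1 < \<tau> + \<epsilon>/2" unfolding Bs_def by auto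
  define M where "M = max i1 a0"
  have MD: "M \<in> enum_dom Q" using i1 a0 unfolding M_def by (auto simp: max_def)
  define F where "F = v ` {i. i \<le> M \<and> x < v i}"
  have Ffin: "finite F" unfolding F_def by simp
  have i1F: "v i1 \<in> F" unfolding F_def M_def using i1 by auto
  define c where "c = Min F"
  have cF: "c \<in> F" unfolding c_def using Ffin i1F by (intro Min_in) auto
  have geF: "\<And>z. z \<in> F \<Longrightarrow> c \<le> z" unfolding c_def using Ffin by auto
  obtain ic where ic: "ic \<le> M" "x < v ic" "v ic = c" using cF unfolding F_def by auto
  have icD: "ic \<in> enum_dom Q" using dom_down MD ic by auto
  obtain j where jD: "j \<in> enum_dom Q" "x < v j" "v j < c" using nomin icD ic by force
  define W where "W = {k\<in>enum_dom Q. x < v k \<and> v k < c}"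
  define n where "n = (LEAST k. k \<in> W)"
  have jW: "j \<in> W" using jD unfolding W_def by auto
  have nW: "n \<in> W" unfolding n_def by (rule LeastI[of _ j]) (rule jW)
  have least: "\<And>k. k \<in> W \<Longrightarrow> n \<le> k" unfolding n_def by (rule Least_le)
  have nD: "n \<in> enum_dom Q" and nx: "x < v n" and cn: "v n < c" using nW unfolding W_def by auto
  have Mn: "M < n"
  proof (rule ccontr)
    assume "\<not> M < n" hence "n \<le> M" by simp
    hence "v n \<in> F" unfolding F_def using nx by auto
    thus False using geF cn by force
  qed
  have i1n: "i1 < n" and a0n: "a0 < n" using Mn unfolding M_def by auto
  have vi1c: "c \<le> v i1" using geF i1F by auto
  have lt_ni1: "lt (e n) (e i1)" using lt_iff[OF nD i1(1)] vi1c cn by simp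
  from cases_at[OF nD] i1n consider
      (c1) "(\<forall>k<n. lt (e n) (e k))"
    | (c2) "(\<forall>k<n. lt (e k) (e n))"
    | (c3) a b where "a < n" "b < n" "lt (e a) (e n)" "lt (e n) (e b)"
        "(\<forall>k<n. \<not> (lt (e a) (e k) \<and> lt (e k) (e n)))"
        "(\<forall>k<n. \<not> (lt (e n) (e k) \<and> lt (e k) (e b)))" "v n = (v a + v b) / 2"
    by auto
  then show False
  proof cases
    case c1
    hence "lt (e n) (e a0)" using a0n by auto
    hence "v n < v a0" using lt_iff[OF nD a0(1)] by simp
    thus False using nx a0 by simp
  next
    case c2
    hence "lt (e i1) (e n)" using i1n by auto
    thus False using asym e_in i1(1) nD lt_ni1 by blast
  next
    case c3
    have aD: "a \<in> enum_dom Q" and bD: "b \<in> enum_dom Q" using c3 nD dom_down by auto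
    have "\<not> lt (e i1) (e b)" using c3(6) i1n lt_ni1 by blast
    hence bi1: "v b \<le> v i1" using lt_iff[OF i1(1) bD] by simp
    have an: "v a < v n" using lt_iff[OF aD nD] c3(3) by simp
    have ax: "v a \<le> x"
    proof (rule ccontr)
      assume "\<not> v a \<le> x"
      hence "a \<in> W" unfolding W_def using aD an cn by auto
      thus False using least c3(1) by force
    qed
    have "\<epsilon> \<le> v n - v a" using H[OF aD nD ax nx] .
    moreover have "\<tau> \<le> v n" unfolding \<tau>_def by (rule cInf_lower[OF _ Bbdd]) (use nD nx Bs_def in auto)
    ultimately show False using arithB[OF _ _ c3(7) bi1 i1(3) ep] by blast
  qed
qed

end

context dvl
begin

lemma good_S: "good (v ` enum_dom Q)"
  unfolding good_def
proof (intro conjI allI impI)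
  let ?S = "v ` enum_dom Q"
  show "\<exists>m\<in>?S. \<forall>s\<in>?S. s \<le> m" if ne: "?S \<noteq> {}" and bd: "bdd_above ?S"
  proof (rule ccontr)
    assume "\<not> (\<exists>m\<in>?S. \<forall>s\<in>?S. s \<le> m)"
    hence nm: "\<forall>m\<in>?S. \<exists>s\<in>?S. m < s" by (meson not_le)
    obtain i where "i \<in> enum_dom Q" using ne by auto
    hence z: "0 \<in> enum_dom Q" using dom_down by blast
    obtain Bd where Bd: "\<forall>s\<in>?S. s \<le> Bd" using bd by (auto simp: bdd_above_def)
    obtain n where nD: "n \<in> enum_dom Q" and "v 0 + real (nat \<lceil>Bd - v 0\<rceil> + 1) \<le> v n"
      using unbdd_above[OF nm z] by blast
    moreover have "Bd - v 0 \<le> real (nat \<lceil>Bd - v 0\<rceil>)" by linarith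
    moreover have "v n \<le> Bd" using Bd nD by auto
    ultimately show False by simp
  qed
  show "\<exists>m\<in>?S. \<forall>s\<in>?S. m \<le> s" if ne: "?S \<noteq> {}" and bd: "bdd_below ?S"
  proof (rule ccontr)
    assume "\<not> (\<exists>m\<in>?S. \<forall>s\<in>?S. m \<le> s)"
    hence nm: "\<forall>m\<in>?S. \<exists>s\<in>?S. s < m" by (meson not_le)
    obtain i where "i \<in> enum_dom Q" using ne by auto
    hence z: "0 \<in> enum_dom Q" using dom_down by blast
    obtain Bd where Bd: "\<forall>s\<in>?S. Bd \<le> s" using bd by (auto simp: bdd_below_def)
    obtain n where nD: "n \<in> enum_dom Q" and "v n \<le> v 0 - real (nat \<lceil>v 0 - Bd\<rceil> + 1)"
      using unbdd_below[OF nm z] by blast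
    moreover have "v 0 - Bd \<le> real (nat \<lceil>v 0 - Bd\<rceil>)" by linarith
    moreover have "Bd \<le> v n" using Bd nD by auto
    ultimately show False by simp
  qed
  fix x :: real
  assume h1: "\<exists>s\<in>?S. s \<le> x" and h2: "\<exists>s\<in>?S. x \<le> s"
  show "(\<exists>l u. gapp ?S l u \<and> l < x \<and> x < u) \<or>
       ((\<forall>\<epsilon>>0. \<exists>s\<in>?S. x - \<epsilon> < s \<and> s \<le> x) \<and> (\<forall>\<epsilon>>0. \<exists>s\<in>?S. x \<le> s \<and> s < x + \<epsilon>))"
  proof (cases "x \<in> ?S")
    case True
    thus ?thesis by force
  next
    case xnS: False
    obtain a0 where a0: "a0 \<in> enum_dom Q" "v a0 \<le> x" using h1 by auto
    obtain b0 where b0: "b0 \<in> enum_dom Q" "x \<le> v b0" using h2 by auto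
    have b0': "x < v b0" using b0 xnS by (metis image_eqI order_le_less)
    show ?thesis
    proof (cases "(\<exists>i\<in>enum_dom Q. v i \<le> x \<and> (\<forall>j\<in>enum_dom Q. v j \<le> x \<longrightarrow> v j \<le> v i)) \<and>
                  (\<exists>j\<in>enum_dom Q. x < v j \<and> (\<forall>i\<in>enum_dom Q. x < v i \<longrightarrow> v j \<le> v i))")
      case True
      then obtain i j where i: "i \<in> enum_dom Q" "v i \<le> x" "\<forall>k\<in>enum_dom Q. v k \<le> x \<longrightarrow> v k \<le> v i"
        and j: "j \<in> enum_dom Q" "x < v j" "\<forall>k\<in>enum_dom Q. x < v k \<longrightarrow> v j \<le> v k" by blast
      have ix: "v i < x" using i xnS by (metis image_eqI order_le_less)
      have "gapp ?S (v i) (v j)" unfolding gapp_def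
      proof (intro conjI ballI)
        show "v i \<in> ?S" "v j \<in> ?S" using i j by auto
        show "v i < v j" using ix j by simp
        fix s assume "s \<in> ?S"
        then obtain k where k: "k \<in> enum_dom Q" "s = v k" by auto
        show "s \<le> v i \<or> v j \<le> s"
        proof (cases "v k \<le> x")
          case True thus ?thesis using i k by auto
        next
          case False thus ?thesis using j k by auto
        qed
      qed
      thus ?thesis using ix j by blast
    next
      case False
      have K: "\<exists>i\<in>enum_dom Q. \<exists>j\<in>enum_dom Q. v i \<le> x \<and> x < v j \<and> v j - v i < \<epsilon>" if ep: "\<epsilon> > 0" for \<epsilon>
      proof (cases "\<exists>i\<in>enum_dom Q. v i \<le> x \<and> (\<forall>j\<in>enum_dom Q. v j \<le> x \<longrightarrow> v j \<le> v i)")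
        case True
        hence "\<not> (\<exists>j\<in>enum_dom Q. x < v j \<and> (\<forall>i\<in>enum_dom Q. x < v i \<longrightarrow> v j \<le> v i))" using False by blast
        hence "\<forall>j\<in>enum_dom Q. x < v j \<longrightarrow> (\<exists>i\<in>enum_dom Q. x < v i \<and> v i < v j)"
          by (meson not_le)
        thus ?thesis using keyB[OF a0 b0(1) b0' _ ep] by blast
      next
        case F2: False
        hence "\<forall>i\<in>enum_dom Q. v i \<le> x \<longrightarrow> (\<exists>j\<in>enum_dom Q. v j \<le> x \<and> v i < v j)"
          by (meson not_le)
        thus ?thesis using keyA[OF a0 b0(1) b0' _ ep] by blast
      qed
      have "\<forall>\<epsilon>>0. \<exists>s\<in>?S. x - \<epsilon> < s \<and> s \<le> x"
      proof (intro allI impI)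
        fix \<epsilon> :: real assume "\<epsilon> > 0"
        then obtain i j where "i \<in> enum_dom Q" "j \<in> enum_dom Q" "v i \<le> x" "x < v j" "v j - v i < \<epsilon>"
          using K by blast
        thus "\<exists>s\<in>?S. x - \<epsilon> < s \<and> s \<le> x" by (intro bexI[of _ "v i"]) auto
      qed
      moreover have "\<forall>\<epsilon>>0. \<exists>s\<in>?S. x \<le> s \<and> s < x + \<epsilon>"
      proof (intro allI impI)
        fix \<epsilon> :: real assume "\<epsilon> > 0"
        then obtain i j where "i \<in> enum_dom Q" "j \<in> enum_dom Q" "v i \<le> x" "x < v j" "v j - v i < \<epsilon>"
          using K by blast
        thus "\<exists>s\<in>?S. x \<le> s \<and> s < x + \<epsilon>" by (intro bexI[of _ "v j"]) auto
      qed
      ultimately show ?thesis by blast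
    qed
  qed
qed

end

lemma comp_contains:
  fixes S T :: "real set"
  assumes "T \<subseteq> - closure S" "is_interval T" "x \<in> T"
  shows "T \<subseteq> connected_component_set (- closure S) x"
    "connected_component_set (- closure S) x \<in> components (- closure S)"
proof -
  show "T \<subseteq> connected_component_set (- closure S) x"
    using connected_component_maximal[OF assms(3) is_interval_connected[OF assms(2)] assms(1)] .
  show "connected_component_set (- closure S) x \<in> components (- closure S)"
    unfolding components_iff using assms(1,3) by blast
qed

lemma affine_gap:
  fixes f :: "real \<Rightarrow> real" and S :: "real set"
  assumes cont: "continuous_on UNIV f"
    and aff: "\<forall>C\<in>components (- closure S). bounded C \<longrightarrow> (\<exists>a b. \<forall>x\<in>C. f x = a * x + b)"
    and g: "gapp S l u" and x: "l \<le> x" "x \<le> u"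
  shows "f x = f l + (x - l) / (u - l) * (f u - f l)"
proof -
  have lS: "l \<in> S" "u \<in> S" "l < u" and sep: "\<forall>s\<in>S. s \<le> l \<or> u \<le> s"
    using g by (auto simp: gapp_def)
  have "closure S \<subseteq> - {l<..<u}"
    by (rule closure_minimal) (use sep in \<open>auto simp: closed_Compl\<close>)
  hence T: "{l<..<u} \<subseteq> - closure S" by auto
  define m where "m = (l + u) / 2"
  have m: "m \<in> {l<..<u}" using lS unfolding m_def by auto
  have II: "is_interval {l<..<u}" by (simp add: is_interval_1)
  define C where "C = connected_component_set (- closure S) m"
  have TC: "{l<..<u} \<subseteq> C" and Cc: "C \<in> components (- closure S)"
    using comp_contains[OF T II m] unfolding C_def by auto
  have CI: "is_interval C" unfolding C_def using is_interval_connected_1 by blast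
  have Csub: "C \<subseteq> - closure S" unfolding C_def by (rule connected_component_subset)
  have lC: "l \<notin> C" "u \<notin> C" using Csub lS closure_subset by auto
  have "C \<subseteq> {l<..<u}"
  proof
    fix y assume yC: "y \<in> C"
    have mC: "m \<in> C" using subsetD[OF TC m] .
    have ml: "l \<le> m" "m \<le> u" using m by auto
    have CI': "\<And>a b z. a \<in> C \<Longrightarrow> b \<in> C \<Longrightarrow> a \<le> z \<Longrightarrow> z \<le> b \<Longrightarrow> z \<in> C"
      using CI unfolding is_interval_1 by blast
    have "\<not> y \<le> l"
    proof
      assume "y \<le> l"
      hence "l \<in> C" using CI'[OF yC mC] ml by blast
      thus False using lC by auto
    qed
    moreover have "\<not> u \<le> y"
    proof
      assume "u \<le> y"
      hence "u \<in> C" using CI'[OF mC yC] ml by blast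
      thus False using lC by auto
    qed
    ultimately show "y \<in> {l<..<u}" by auto
  qed
  moreover have "bounded {l<..<u}" unfolding bounded_real by (intro exI[of _ "max \<bar>l\<bar> \<bar>u\<bar>"]) auto
  ultimately have "bounded C" using bounded_subset by blast
  then obtain a b where ab: "\<forall>y\<in>C. f y = a * y + b" using aff Cc by blast
  have cl: "closed {y. f y = a * y + b}"
    by (rule closed_Collect_eq[OF cont]) (intro continuous_intros)
  have "{l<..<u} \<subseteq> {y. f y = a * y + b}" using ab TC by auto
  hence "closure {l<..<u} \<subseteq> {y. f y = a * y + b}" using cl by (rule closure_minimal)
  hence E: "\<forall>y\<in>{l..u}. f y = a * y + b" using lS by auto
  have "f x = a * x + b" "f l = a * l + b" "f u = a * u + b" using E x lS by auto
  moreover have "(x - l) / (u - l) * (a * u - a * l) = a * (x - l)"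
    using lS by (simp add: field_simps)
  ultimately show ?thesis by (simp add: algebra_simps)
qed


lemma not_bounded_Ioi: "\<not> bounded ({y<..} :: real set)"
proof
  assume "bounded ({y<..} :: real set)"
  then obtain B where B: "\<forall>z\<in>{y<..}. \<bar>z\<bar> \<le> B" unfolding bounded_real by blast
  have "max (y + 1) (B + 1) \<in> {y<..}" by auto
  thus False using B by force
qed

lemma not_bounded_Iio: "\<not> bounded ({..<y} :: real set)"
proof
  assume "bounded ({..<y} :: real set)"
  then obtain B where B: "\<forall>z\<in>{..<y}. \<bar>z\<bar> \<le> B" unfolding bounded_real by blast
  have "min (y - 1) (- B - 1) \<in> {..<y}" by auto
  thus False using B by force
qed

lemma id_above:
  fixes f :: "real \<Rightarrow> real" and S :: "real set"
  assumes unb: "\<forall>C\<in>components (- closure S). \<not> bounded C \<longrightarrow> (\<forall>x\<in>C. f x = x)"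
    and y: "\<forall>s\<in>S. s \<le> y" and yx: "y < x"
  shows "f x = x"
proof -
  have "closure S \<subseteq> {..y}" by (rule closure_minimal) (use y in auto)
  hence T: "{y<..} \<subseteq> - closure S" by auto
  have II: "is_interval {y<..}" by (simp add: is_interval_1)
  have xT: "x \<in> {y<..}" using yx by auto
  define C where "C = connected_component_set (- closure S) x"
  have TC: "{y<..} \<subseteq> C" and Cc: "C \<in> components (- closure S)"
    using comp_contains[OF T II xT] unfolding C_def by auto
  have "\<not> bounded C" using TC not_bounded_Ioi bounded_subset by blast
  thus ?thesis using unb Cc TC xT by blast
qed

lemma id_below:
  fixes f :: "real \<Rightarrow> real" and S :: "real set"
  assumes unb: "\<forall>C\<in>components (- closure S). \<not> bounded C \<longrightarrow> (\<forall>x\<in>C. f x = x)"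
    and y: "\<forall>s\<in>S. y \<le> s" and yx: "x < y"
  shows "f x = x"
proof -
  have "closure S \<subseteq> {y..}" by (rule closure_minimal) (use y in auto)
  hence T: "{..<y} \<subseteq> - closure S" by auto
  have II: "is_interval {..<y}" by (simp add: is_interval_1)
  have xT: "x \<in> {..<y}" using yx by auto
  define C where "C = connected_component_set (- closure S) x"
  have TC: "{..<y} \<subseteq> C" and Cc: "C \<in> components (- closure S)"
    using comp_contains[OF T II xT] unfolding C_def by auto
  have "\<not> bounded C" using TC not_bounded_Iio bounded_subset by blast
  thus ?thesis using unb Cc TC xT by blast
qed

lemma interp_t: "(a::real) \<noteq> b \<Longrightarrow> (a + t * (b - a) - a) / (b - a) = t"
  by simp

lemma interp_range: "(a::real) < b \<Longrightarrow> 0 \<le> t \<Longrightarrow> t \<le> 1 \<Longrightarrow> a \<le> a + t * (b - a) \<and> a + t * (b - a) \<le> b"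
proof -
  assume ab: "a < b" and t: "0 \<le> t" "t \<le> 1"
  have "0 \<le> t * (b - a)" using ab t by simp
  moreover have "t * (b - a) \<le> 1 * (b - a)" using ab t by (intro mult_right_mono) auto
  ultimately show ?thesis by simp
qed

lemma radj:
  assumes qd: "quandle Q qop" and ro: "right_order Q qop lt"
    and r: "r1 \<in> Q" "r2 \<in> Q" "q \<in> Q" and l12: "lt r1 r2" and adj: "\<forall>r\<in>Q. \<not> (lt r1 r \<and> lt r r2)"
  shows "lt (qop r1 q) (qop r2 q) \<and> (\<forall>r\<in>Q. \<not> (lt (qop r1 q) r \<and> lt r (qop r2 q)))"
proof -
  note ro' = ro[unfolded right_order_def]
  have irr: "\<forall>q\<in>Q. \<not> lt q q" using conjunct1[OF ro'] .
  have trn: "\<forall>q\<in>Q. \<forall>r\<in>Q. \<forall>s\<in>Q. lt q r \<longrightarrow> lt r s \<longrightarrow> lt q s" using conjunct1[OF conjunct2[OF ro']] .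
  have tot: "\<forall>q\<in>Q. \<forall>r\<in>Q. q \<noteq> r \<longrightarrow> lt q r \<or> lt r q" using conjunct1[OF conjunct2[OF conjunct2[OF ro']]] .
  have mo: "\<forall>q1\<in>Q. \<forall>q2\<in>Q. \<forall>q\<in>Q. lt q1 q2 \<longrightarrow> lt (qop q1 q) (qop q2 q)" using conjunct2[OF conjunct2[OF conjunct2[OF ro']]] .
  note qd' = qd[unfolded quandle_def]
  have cl: "\<forall>q\<in>Q. \<forall>r\<in>Q. qop q r \<in> Q" using conjunct1[OF qd'] .
  have dv: "\<forall>r\<in>Q. \<forall>s\<in>Q. \<exists>!q. q \<in> Q \<and> qop q r = s" using conjunct1[OF conjunct2[OF conjunct2[OF qd']]] .
  have "lt (qop r1 q) (qop r2 q)" using mo r l12 by blast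
  moreover have "\<not> (lt (qop r1 q) s \<and> lt s (qop r2 q))" if sQ: "s \<in> Q" for s
  proof
    assume H: "lt (qop r1 q) s \<and> lt s (qop r2 q)"
    obtain r0 where r0: "r0 \<in> Q" "qop r0 q = s" using dv sQ r by blast
    have q1: "qop r1 q \<in> Q" and q2: "qop r2 q \<in> Q" using cl r by auto
    have "lt r1 r0"
    proof (rule ccontr)
      assume n: "\<not> lt r1 r0"
      show False
      proof (cases "r0 = r1")
        case True
        hence "s = qop r1 q" using r0 by simp
        thus False using H irr sQ by auto
      next
        case False
        hence "lt r0 r1" using tot n r0 r by blast
        hence "lt s (qop r1 q)" using mo r0 r by blast
        thus False using H irr trn q1 sQ by blast
      qed
    qed
    moreover have "lt r0 r2"
    proof (rule ccontr)
      assume n: "\<not> lt r0 r2"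
      show False
      proof (cases "r0 = r2")
        case True
        hence "s = qop r2 q" using r0 by simp
        thus False using H irr sQ by auto
      next
        case False
        hence "lt r2 r0" using tot n r0 r by blast
        hence "lt (qop r2 q) s" using mo r0 r by blast
        thus False using H irr trn q2 sQ by blast
      qed
    qed
    ultimately show False using adj r0 by blast
  qed
  ultimately show ?thesis by blast
qed

context dvl
begin

definition iot :: "'a \<Rightarrow> real" where "iot q = v (the_inv_into (enum_dom Q) e q)"

lemma bij: "bij_betw e (enum_dom Q) Q" using en unfolding enumeration_def .

lemma inv_props: "q \<in> Q \<Longrightarrow> the_inv_into (enum_dom Q) e q \<in> enum_dom Q \<and> e (the_inv_into (enum_dom Q) e q) = q"
  using bij by (metis bij_betw_def the_inv_into_into f_the_inv_into_f order_refl)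

lemma iot_e: "i \<in> enum_dom Q \<Longrightarrow> iot (e i) = v i"
  unfolding iot_def using bij by (metis bij_betw_def the_inv_into_f_f)

lemma iot_lt: "r \<in> Q \<Longrightarrow> s \<in> Q \<Longrightarrow> iot r < iot s \<longleftrightarrow> lt r s"
  unfolding iot_def using lt_iff inv_props by metis

lemma iot_img: "iot ` Q = v ` enum_dom Q"
proof
  show "iot ` Q \<subseteq> v ` enum_dom Q" unfolding iot_def using inv_props by auto
  show "v ` enum_dom Q \<subseteq> iot ` Q"
  proof
    fix y assume "y \<in> v ` enum_dom Q"
    then obtain i where i: "i \<in> enum_dom Q" "y = v i" by auto
    hence "y = iot (e i)" using iot_e by simp
    moreover have "e i \<in> Q" using e_in i by auto
    ultimately show "y \<in> iot ` Q" by blast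
  qed
qed

lemma iot_inj: "inj_on iot Q"
proof (rule inj_onI)
  fix r s assume r: "r \<in> Q" and s: "s \<in> Q" and eq: "iot r = iot s"
  show "r = s"
  proof (rule ccontr)
    assume "r \<noteq> s"
    hence "lt r s \<or> lt s r" using tot r s by blast
    thus False using iot_lt[OF r s] iot_lt[OF s r] eq by auto
  qed
qed

lemma iot_adj:
  assumes r: "r1 \<in> Q" "r2 \<in> Q"
  shows "gapp (iot ` Q) (iot r1) (iot r2) \<longleftrightarrow> lt r1 r2 \<and> (\<forall>r\<in>Q. \<not> (lt r1 r \<and> lt r r2))"
proof
  assume g: "gapp (iot ` Q) (iot r1) (iot r2)"
  hence "iot r1 < iot r2" unfolding gapp_def by blast
  hence "lt r1 r2" using iot_lt r by blast
  moreover have "\<not> (lt r1 r \<and> lt r r2)" if rQ: "r \<in> Q" for r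
  proof -
    have "iot r \<le> iot r1 \<or> iot r2 \<le> iot r" using g rQ unfolding gapp_def by blast
    thus ?thesis using iot_lt[OF r(1) rQ] iot_lt[OF rQ r(2)] by auto
  qed
  ultimately show "lt r1 r2 \<and> (\<forall>r\<in>Q. \<not> (lt r1 r \<and> lt r r2))" by blast
next
  assume H: "lt r1 r2 \<and> (\<forall>r\<in>Q. \<not> (lt r1 r \<and> lt r r2))"
  show "gapp (iot ` Q) (iot r1) (iot r2)" unfolding gapp_def
  proof (intro conjI ballI)
    show "iot r1 \<in> iot ` Q" "iot r2 \<in> iot ` Q" using r by auto
    show "iot r1 < iot r2" using H iot_lt r by blast
    fix s assume "s \<in> iot ` Q"
    then obtain r where rQ: "r \<in> Q" "s = iot r" by auto
    have "\<not> (lt r1 r \<and> lt r r2)" using H rQ by blast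
    thus "s \<le> iot r1 \<or> iot r2 \<le> s" using iot_lt[OF r(1) rQ(1)] iot_lt[OF rQ(1) r(2)] rQ(2) by auto
  qed
qed

end

theorem lemma3p6:
  fixes Q :: "'a set" and qop :: "'a \<Rightarrow> 'a \<Rightarrow> 'a" and lt :: "'a \<Rightarrow> 'a \<Rightarrow> bool"
    and e e' :: "nat \<Rightarrow> 'a" and rho rho' :: "'a \<Rightarrow> real \<Rightarrow> real"
  assumes "quandle Q qop" and "countable Q" and "weak_latin Q qop"
    and "right_order Q qop lt"
    and "enumeration Q e" and "enumeration Q e'"
    and "dyn_realization Q qop lt e rho" and "dyn_realization Q qop lt e' rho'"
  shows "\<exists>h g. homeomorphism UNIV UNIV h g \<and> strict_mono h \<and>
           (\<forall>q\<in>Q. \<forall>x. h (rho q x) = rho' q (h x))"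
proof (cases "Q = {}")
  case True
  have sm: "strict_mono (id::real\<Rightarrow>real)" by (simp add: strict_mono_def)
  have "homeomorphism UNIV UNIV (id::real\<Rightarrow>real) (inv id)" by (rule homeo_of_smono[OF sm]) simp
  thus ?thesis using True sm by blast
next
  case Qne: False
  note ro' = assms(4)[unfolded right_order_def]
  have irr: "\<forall>q\<in>Q. \<not> lt q q" using conjunct1[OF ro'] .
  have trn: "\<forall>q\<in>Q. \<forall>r\<in>Q. \<forall>s\<in>Q. lt q r \<longrightarrow> lt r s \<longrightarrow> lt q s" using conjunct1[OF conjunct2[OF ro']] .
  have tot: "\<forall>q\<in>Q. \<forall>r\<in>Q. q \<noteq> r \<longrightarrow> lt q r \<or> lt r q" using conjunct1[OF conjunct2[OF conjunct2[OF ro']]] .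
  have cl: "\<forall>q\<in>Q. \<forall>r\<in>Q. qop q r \<in> Q" using conjunct1[OF assms(1)[unfolded quandle_def]] .
  obtain v where dv: "dyn_values Q lt e v" and R: "let iota = (\<lambda>q. v (the_inv_into (enum_dom Q) e q)) in
        \<forall>q\<in>Q. continuous_on UNIV (rho q) \<and>
          (\<forall>r\<in>Q. rho q (iota r) = iota (qop r q)) \<and>
          (\<forall>C\<in>components (- closure (iota ` Q)).
             (bounded C \<longrightarrow> (\<exists>a b. \<forall>x\<in>C. rho q x = a * x + b)) \<and>
             (\<not> bounded C \<longrightarrow> (\<forall>x\<in>C. rho q x = x)))"
    using assms(7) unfolding dyn_realization_def by blast
  obtain v' where dv': "dyn_values Q lt e' v'" and R': "let iota = (\<lambda>q. v' (the_inv_into (enum_dom Q) e' q)) in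
        \<forall>q\<in>Q. continuous_on UNIV (rho' q) \<and>
          (\<forall>r\<in>Q. rho' q (iota r) = iota (qop r q)) \<and>
          (\<forall>C\<in>components (- closure (iota ` Q)).
             (bounded C \<longrightarrow> (\<exists>a b. \<forall>x\<in>C. rho' q x = a * x + b)) \<and>
             (\<not> bounded C \<longrightarrow> (\<forall>x\<in>C. rho' q x = x)))"
    using assms(8) unfolding dyn_realization_def by blast
  interpret d1: dvl Q lt e v using irr trn tot assms(5) dv by unfold_locales
  interpret d2: dvl Q lt e' v' using irr trn tot assms(6) dv' by unfold_locales
  have e1: "(\<lambda>q. v (the_inv_into (enum_dom Q) e q)) = d1.iot" by (simp add: d1.iot_def[abs_def])
  have e2: "(\<lambda>q. v' (the_inv_into (enum_dom Q) e' q)) = d2.iot" by (simp add: d2.iot_def[abs_def])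
  have R1: "\<forall>q\<in>Q. continuous_on UNIV (rho q) \<and>
          (\<forall>r\<in>Q. rho q (d1.iot r) = d1.iot (qop r q)) \<and>
          (\<forall>C\<in>components (- closure (d1.iot ` Q)).
             (bounded C \<longrightarrow> (\<exists>a b. \<forall>x\<in>C. rho q x = a * x + b)) \<and>
             (\<not> bounded C \<longrightarrow> (\<forall>x\<in>C. rho q x = x)))"
    using R unfolding e1 Let_def .
  have R2: "\<forall>q\<in>Q. continuous_on UNIV (rho' q) \<and>
          (\<forall>r\<in>Q. rho' q (d2.iot r) = d2.iot (qop r q)) \<and>
          (\<forall>C\<in>components (- closure (d2.iot ` Q)).
             (bounded C \<longrightarrow> (\<exists>a b. \<forall>x\<in>C. rho' q x = a * x + b)) \<and>
             (\<not> bounded C \<longrightarrow> (\<forall>x\<in>C. rho' q x = x)))"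
    using R' unfolding e2 Let_def .
  define S where "S = d1.iot ` Q"
  define S' where "S' = d2.iot ` Q"
  define \<phi> where "\<phi> y = d2.iot (the_inv_into Q d1.iot y)" for y
  have \<phi>I: "\<And>r. r \<in> Q \<Longrightarrow> \<phi> (d1.iot r) = d2.iot r"
    unfolding \<phi>_def using the_inv_into_f_f[OF d1.iot_inj] by simp
  have smo: "strict_mono_on S \<phi>"
    unfolding strict_mono_on_def
  proof (intro allI impI)
    fix y1 y2 assume "y1 \<in> S \<and> y2 \<in> S \<and> y1 < y2"
    then obtain r1 r2 where r: "r1 \<in> Q" "r2 \<in> Q" "y1 = d1.iot r1" "y2 = d1.iot r2" "y1 < y2"
      unfolding S_def by blast
    hence "lt r1 r2" using d1.iot_lt by blast
    hence "d2.iot r1 < d2.iot r2" using d2.iot_lt r by blast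
    thus "\<phi> y1 < \<phi> y2" using r \<phi>I by simp
  qed
  have img: "\<phi> ` S = S'"
  proof
    show "\<phi> ` S \<subseteq> S'" unfolding S_def S'_def using \<phi>I by auto
    show "S' \<subseteq> \<phi> ` S"
    proof
      fix y assume "y \<in> S'"
      then obtain r where "r \<in> Q" "y = d2.iot r" unfolding S'_def by blast
      hence "y = \<phi> (d1.iot r)" "d1.iot r \<in> S" using \<phi>I unfolding S_def by auto
      thus "y \<in> \<phi> ` S" by blast
    qed
  qed
  have gS: "good S" unfolding S_def d1.iot_img by (rule d1.good_S)
  have gS': "good S'" unfolding S'_def d2.iot_img by (rule d2.good_S)
  interpret ex: extc S S' \<phi> using gS gS' smo img by unfold_locales
  define h where "h = extf S \<phi>"
  have hm: "strict_mono h" unfolding h_def by (rule ex.h_mono)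
  have hs: "surj h" unfolding h_def by (rule ex.h_surj)
  have hc: "continuous_on UNIV h" by (rule smono_surj_cont[OF hm hs])
  have hI: "\<And>r. r \<in> Q \<Longrightarrow> h (d1.iot r) = d2.iot r"
    unfolding h_def using ex.h_S \<phi>I S_def by auto
  have hle: "\<And>a b. a \<le> b \<Longrightarrow> h a \<le> h b" using hm by (simp add: strict_mono_less_eq)
  have conj: "h (rho q x) = rho' q (h x)" if qQ: "q \<in> Q" for q x
  proof -
    have rc: "continuous_on UNIV (rho q)" and rI: "\<forall>r\<in>Q. rho q (d1.iot r) = d1.iot (qop r q)"
      and raff: "\<forall>C\<in>components (- closure S). bounded C \<longrightarrow> (\<exists>a b. \<forall>x\<in>C. rho q x = a * x + b)"
      and rid: "\<forall>C\<in>components (- closure S). \<not> bounded C \<longrightarrow> (\<forall>x\<in>C. rho q x = x)"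
      using R1 qQ unfolding S_def by blast+
    have rc': "continuous_on UNIV (rho' q)" and rI': "\<forall>r\<in>Q. rho' q (d2.iot r) = d2.iot (qop r q)"
      and raff': "\<forall>C\<in>components (- closure S'). bounded C \<longrightarrow> (\<exists>a b. \<forall>x\<in>C. rho' q x = a * x + b)"
      and rid': "\<forall>C\<in>components (- closure S'). \<not> bounded C \<longrightarrow> (\<forall>x\<in>C. rho' q x = x)"
      using R2 qQ unfolding S'_def by blast+
    have onS: "h (rho q s) = rho' q (h s)" if sS: "s \<in> S" for s
    proof -
      obtain r where r: "r \<in> Q" "s = d1.iot r" using sS unfolding S_def by blast
      have rq: "qop r q \<in> Q" using cl r qQ by blast
      have "h (rho q s) = d2.iot (qop r q)" using rI r rq hI by simp
      moreover have "rho' q (h s) = d2.iot (qop r q)" using rI' r hI by simp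
      ultimately show ?thesis by simp
    qed
    show ?thesis
    proof (cases "x \<in> closure S")
      case True
      have c1: "continuous_on UNIV (\<lambda>x. h (rho q x))" by (rule continuous_on_compose2[OF hc rc]) simp
      have c2: "continuous_on UNIV (\<lambda>x. rho' q (h x))" by (rule continuous_on_compose2[OF rc' hc]) simp
      have "closure S \<subseteq> {x. h (rho q x) = rho' q (h x)}"
        by (rule closure_minimal) (use onS closed_Collect_eq[OF c1 c2] in auto)
      thus ?thesis using True by auto
    next
      case xncl: False
      obtain \<epsilon> where ep: "\<epsilon> > 0" and far: "\<forall>s\<in>S. \<epsilon> \<le> dist s x"
        using xncl unfolding closure_approachable by (meson not_less)
      consider (hull) "\<exists>s\<in>S. s \<le> x" "\<exists>s\<in>S. x \<le> s" | (below) "\<not> (\<exists>s\<in>S. s \<le> x)"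
        | (above) "\<exists>s\<in>S. s \<le> x" "\<not> (\<exists>s\<in>S. x \<le> s)" by blast
      then show ?thesis
      proof cases
        case hull
        from ex.good_hull[OF hull] obtain l u where g: "gapp S l u" "l < x" "x < u"
        proof
          assume "\<exists>l u. gapp S l u \<and> l < x \<and> x < u"
          then obtain l u where "gapp S l u" "l < x" "x < u" by blast
          thus ?thesis by (rule that)
        next
          assume "(\<forall>\<epsilon>>0. \<exists>s\<in>S. x - \<epsilon> < s \<and> s \<le> x) \<and> (\<forall>\<epsilon>>0. \<exists>s\<in>S. x \<le> s \<and> s < x + \<epsilon>)"
          hence "\<forall>\<epsilon>>0. \<exists>s\<in>S. x - \<epsilon> < s \<and> s \<le> x" by blast
          from this[rule_format, OF ep] obtain s where "s \<in> S" "x - \<epsilon> < s" "s \<le> x" by blast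
          moreover have "dist s x < \<epsilon>" using calculation by (simp add: dist_real_def)
          ultimately show ?thesis using far by force
        qed
        obtain r1 r2 where r12: "r1 \<in> Q" "r2 \<in> Q" "l = d1.iot r1" "u = d1.iot r2"
          using g unfolding gapp_def S_def by blast
        have adj: "lt r1 r2 \<and> (\<forall>r\<in>Q. \<not> (lt r1 r \<and> lt r r2))"
          using d1.iot_adj[OF r12(1,2)] g(1) r12 unfolding S_def by simp
        have adjq: "lt (qop r1 q) (qop r2 q) \<and> (\<forall>r\<in>Q. \<not> (lt (qop r1 q) r \<and> lt r (qop r2 q)))"
          using radj[OF assms(1) assms(4) r12(1,2) qQ] adj by blast
        have q12: "qop r1 q \<in> Q" "qop r2 q \<in> Q" using cl r12 qQ by auto
        have gq: "gapp S (d1.iot (qop r1 q)) (d1.iot (qop r2 q))"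
          using d1.iot_adj[OF q12] adjq unfolding S_def by simp
        have g': "gapp S' (d2.iot r1) (d2.iot r2)"
          using d2.iot_adj[OF r12(1,2)] adj unfolding S'_def by simp
        define L where "L = d1.iot r1"
        define U where "U = d1.iot r2"
        define t where "t = (x - L) / (U - L)"
        have LU: "L < U" using g unfolding gapp_def L_def U_def r12 by simp
        have xLU: "L < x" "x < U" using g r12 L_def U_def by auto
        have t01: "0 \<le> t" "t \<le> 1" unfolding t_def using LU xLU by auto
        define Lq where "Lq = d1.iot (qop r1 q)"
        define Uq where "Uq = d1.iot (qop r2 q)"
        have LUq: "Lq < Uq" using gq unfolding gapp_def Lq_def Uq_def by simp
        have "rho q x = rho q L + (x - L) / (U - L) * (rho q U - rho q L)"
          using affine_gap[OF rc raff, of L U x] g r12 xLU unfolding L_def U_def by auto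
        hence rx: "rho q x = Lq + t * (Uq - Lq)"
          unfolding t_def Lq_def Uq_def L_def U_def using rI r12 by simp
        have rxr: "Lq \<le> rho q x" "rho q x \<le> Uq" using interp_range[OF LUq t01] rx by auto
        have "h (rho q x) = \<phi> Lq + (rho q x - Lq) / (Uq - Lq) * (\<phi> Uq - \<phi> Lq)"
          unfolding h_def using ex.h_gap[OF gq[folded Lq_def Uq_def] rxr] .
        also have "(rho q x - Lq) / (Uq - Lq) = t" unfolding rx using LUq by simp
        finally have lhs: "h (rho q x) = d2.iot (qop r1 q) + t * (d2.iot (qop r2 q) - d2.iot (qop r1 q))"
          unfolding Lq_def Uq_def using \<phi>I q12 by simp
        define L' where "L' = d2.iot r1"
        define U' where "U' = d2.iot r2"
        have LU': "L' < U'" using g' unfolding gapp_def L'_def U'_def by simp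
        have "h x = \<phi> L + (x - L) / (U - L) * (\<phi> U - \<phi> L)"
          unfolding h_def using ex.h_gap[OF g(1)] xLU r12 unfolding L_def U_def by auto
        hence hx: "h x = L' + t * (U' - L')" unfolding t_def L'_def U'_def L_def U_def using \<phi>I r12 by simp
        have hxr: "L' \<le> h x" "h x \<le> U'" using interp_range[OF LU' t01] hx by auto
        have "rho' q (h x) = rho' q L' + (h x - L') / (U' - L') * (rho' q U' - rho' q L')"
          using affine_gap[OF rc' raff' g'[folded L'_def U'_def] hxr] .
        also have "(h x - L') / (U' - L') = t" unfolding hx using LU' by simp
        finally have rhs: "rho' q (h x) = d2.iot (qop r1 q) + t * (d2.iot (qop r2 q) - d2.iot (qop r1 q))"
          unfolding L'_def U'_def using rI' r12 by simp
        show ?thesis using lhs rhs by simp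
      next
        case below
        have sge: "\<forall>s\<in>S. x + \<epsilon> \<le> s"
        proof
          fix s assume sS: "s \<in> S"
          hence "x < s" using below by force
          moreover have "\<epsilon> \<le> dist s x" using far sS by blast
          ultimately show "x + \<epsilon> \<le> s" by (simp add: dist_real_def)
        qed
        have "rho q x = x" using id_below[OF rid sge] ep by simp
        moreover have "rho' q (h x) = h x"
        proof (rule id_below[OF rid'])
          show "\<forall>s\<in>S'. h (x + \<epsilon>) \<le> s"
          proof
            fix s' assume "s' \<in> S'"
            then obtain r where r: "r \<in> Q" "s' = d2.iot r" unfolding S'_def by blast
            have "d1.iot r \<in> S" using r unfolding S_def by blast
            hence "h (x + \<epsilon>) \<le> h (d1.iot r)" using sge hle by blast
            thus "h (x + \<epsilon>) \<le> s'" using hI r by simp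
          qed
          show "h x < h (x + \<epsilon>)" using hm ep by (simp add: strict_mono_less)
        qed
        ultimately show ?thesis by simp
      next
        case above
        have sle: "\<forall>s\<in>S. s \<le> x - \<epsilon>"
        proof
          fix s assume sS: "s \<in> S"
          hence "s < x" using above by force
          moreover have "\<epsilon> \<le> dist s x" using far sS by blast
          ultimately show "s \<le> x - \<epsilon>" by (simp add: dist_real_def)
        qed
        have "rho q x = x" using id_above[OF rid sle] ep by simp
        moreover have "rho' q (h x) = h x"
        proof (rule id_above[OF rid'])
          show "\<forall>s\<in>S'. s \<le> h (x - \<epsilon>)"
          proof
            fix s' assume "s' \<in> S'"
            then obtain r where r: "r \<in> Q" "s' = d2.iot r" unfolding S'_def by blast
            have "d1.iot r \<in> S" using r unfolding S_def by blast
            hence "h (d1.iot r) \<le> h (x - \<epsilon>)" using sle hle by blast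
            thus "s' \<le> h (x - \<epsilon>)" using hI r by simp
          qed
          show "h (x - \<epsilon>) < h x" using hm ep by (simp add: strict_mono_less)
        qed
        ultimately show ?thesis by simp
      qed
    qed
  qed
  have "homeomorphism UNIV UNIV h (inv h)" by (rule homeo_of_smono[OF hm hs])
  thus ?thesis using hm conj by blast
qed

end
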